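(* Let $q\ge2$, $T=\mathbb T_q$ the homogeneous tree of degree $q+1$ with root $o$ and reference end $\varpi$, $\alpha\in(0,1)$, and $P$ the affine nearest-neighbour random walk with $p(x,y)=\alpha/q$ if $\mathrm{hor}(y)=\mathrm{hor}(x)+1$ and $p(x,y)=1-\alpha$ if $\mathrm{hor}(y)=\mathrm{hor}(x)-1$. Put $\rho=2\sqrt{\alpha(1-\alpha)}$ and $\lambda_0=\frac{q+1}{2\sqrt q}\rho$. Let $\lambda\in\mathbb C\setminus[-\rho,\rho]$ with $\lambda\ne\lambda_0$, and $\xi\in\partial T$. Let $\nu^\xi$ and $\tilde\nu^\xi$ be the (unique) strong distributions on $\partial T$ such that for all $x\in T$ $$\tilde K(x,\xi|\lambda)=\int_{\partial T}K(x,\cdot|\lambda)\,d\nu^\xi,\qquad K(x,\xi|\lambda)=\int_{\partial T}\tilde K(x,\cdot|\lambda)\,d\tilde\nu^\xi.$$ Then $\nu^\xi$ extends to a complex $\sigma$-additive Borel measure on $\partial T$, while $\tilde\nu^\xi$ does not. If in particular $\lambda>\rho$ is real, then $\nu^\xi$ is a Borel probability measure whose support is all of $\partial T$, so that $\tilde K(\cdot,\xi|\lambda)$ is not minimal in $\mathcal H_o(\lambda)$.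
   Context: Ends, $\partial T$, geodesics $\pi(x,y)$, cones $T_x$, arcs $\partial T_x$, predecessor $x^-$ and confluent $v\wedge w$ (w.r.t. $o$) as usual; $\partial T$ carries the topology generated by the arcs $\partial T_x$. $\mathrm{hor}(x,\xi)=d(x,x\wedge\xi)-d(o,x\wedge\xi)$, $\mathrm{hor}(x)=\mathrm{hor}(x,\varpi)$. Square roots: principal branch on $\mathbb C\setminus(-\infty,0]$. $F_-(\lambda)=\frac{\lambda}{2\alpha}(1-\sqrt{1-4\alpha(1-\alpha)/\lambda^2})$, $\tilde F_-(\lambda)=\frac{\lambda}{2\alpha}(1+\sqrt{1-4\alpha(1-\alpha)/\lambda^2})$, $F_+=\frac{\alpha}{(1-\alpha)q}F_-$, $\tilde F_+=\frac{\alpha}{(1-\alpha)q}\tilde F_-$. Edge weights $f(x,y)=F_\pm(\lambda)$, $\tilde f(x,y)=\tilde F_\pm(\lambda)$ for $x\sim y$ with $\mathrm{hor}(y)=\mathrm{hor}(x)\pm1$, extended by $1$ on the diagonal and multiplicatively along geodesics; $K(x,w|\lambda)=f(x,x\wedge w)/f(o,x\wedge w)$, $\tilde K(x,w|\lambda)=\tilde f(x,x\wedge w)/\tilde f(o,x\wedge w)$. A distribution is a complex finitely additive set function on the algebra of finite disjoint unions of sets $\partial T_x\setminus\bigcup_{y\in S}\partial T_y$ ($S$ finite, $y^-=x$), integrated against locally constant functions in the obvious way; strong means $\sum_{y:y^-=x}\nu(\partial T_y)$ converges absolutely for each $x$. "Extends to a $\sigma$-additive Borel measure" means there is a complex Borel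 measure on $\partial T$ agreeing with the distribution on that algebra. $\mathcal H_o(\lambda)=\{h:T\to(0,\infty)\mid h(o)=1,\ Ph=\lambda h\}$; $h$ is minimal if it is an extremal point of this convex set. *)

theory Defs
  imports "HOL-Probability.Probability"
begin

text \<open>Vertices: reduced words over the alphabet {0..q} (no two consecutive equal letters);
  the root o is the empty word, the word x is the geodesic from o, the predecessor of x
  is butlast x. This is the Cayley graph of the free product of q+1 copies of Z/2,
  i.e. the homogeneous tree of degree q+1.\<close>

definition verts :: "nat \<Rightarrow> nat list set" where
  "verts q = {xs. (\<forall>i<length xs. xs ! i \<le> q) \<and> (\<forall>i. Suc i < length xs \<longrightarrow> xs ! Suc i \<noteq> xs ! i)}"

text \<open>Ends: infinite reduced words = geodesic rays from o.\<close>
definition ends :: "nat \<Rightarrow> (nat \<Rightarrow> nat) set" where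
  "ends q = {\<xi>. \<forall>n. \<xi> n \<le> q \<and> \<xi> (Suc n) \<noteq> \<xi> n}"

definition pref :: "(nat \<Rightarrow> nat) \<Rightarrow> nat \<Rightarrow> nat list" where
  "pref \<xi> n = map \<xi> [0..<n]"

definition adj :: "nat list \<Rightarrow> nat list \<Rightarrow> bool" where
  "adj x y \<longleftrightarrow> (\<exists>a. y = x @ [a]) \<or> (\<exists>a. x = y @ [a])"

definition nbrs :: "nat \<Rightarrow> nat list \<Rightarrow> nat list set" where
  "nbrs q x = {y \<in> verts q. adj x y}"

definition children :: "nat \<Rightarrow> nat list \<Rightarrow> nat list set" where
  "children q x = {y \<in> verts q. \<exists>a. y = x @ [a]}"

text \<open>Confluent (w.r.t. o) = longest common prefix.\<close>
fun lcp :: "nat list \<Rightarrow> nat list \<Rightarrow> nat list" where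
  "lcp (a # xs) (b # ys) = (if a = b then a # lcp xs ys else [])"
| "lcp _ _ = []"

definition confE :: "nat list \<Rightarrow> (nat \<Rightarrow> nat) \<Rightarrow> nat list" where
  "confE x \<xi> = lcp x (pref \<xi> (length x))"

text \<open>hor(x,xi) = d(x, x /\ xi) - d(o, x /\ xi).\<close>
definition hor :: "nat list \<Rightarrow> (nat \<Rightarrow> nat) \<Rightarrow> int" where
  "hor x \<xi> = int (length x) - 2 * int (length (confE x \<xi>))"

definition tarc :: "nat \<Rightarrow> nat list \<Rightarrow> (nat \<Rightarrow> nat) set" where
  "tarc q x = {\<xi> \<in> ends q. pref \<xi> (length x) = x}"

definition bdry_top :: "nat \<Rightarrow> (nat \<Rightarrow> nat) topology" where
  "bdry_top q = topology_generated_by (tarc q ` verts q)"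

definition bdry_borel :: "nat \<Rightarrow> (nat \<Rightarrow> nat) measure" where
  "bdry_borel q = sigma (topspace (bdry_top q)) {U. openin (bdry_top q) U}"

definition trans_prob :: "nat \<Rightarrow> real \<Rightarrow> (nat \<Rightarrow> nat) \<Rightarrow> nat list \<Rightarrow> nat list \<Rightarrow> real" where
  "trans_prob q \<alpha> \<omega> x y =
     (if adj x y \<and> hor y \<omega> = hor x \<omega> + 1 then \<alpha> / real q
      else if adj x y \<and> hor y \<omega> = hor x \<omega> - 1 then 1 - \<alpha> else 0)"

definition Fm :: "real \<Rightarrow> complex \<Rightarrow> complex" where
  "Fm \<alpha> lam = lam / (2 * of_real \<alpha>) * (1 - csqrt (1 - 4 * of_real (\<alpha> * (1 - \<alpha>)) / lam\<^sup>2))"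

definition Fmt :: "real \<Rightarrow> complex \<Rightarrow> complex" where
  "Fmt \<alpha> lam = lam / (2 * of_real \<alpha>) * (1 + csqrt (1 - 4 * of_real (\<alpha> * (1 - \<alpha>)) / lam\<^sup>2))"

definition Fp :: "nat \<Rightarrow> real \<Rightarrow> complex \<Rightarrow> complex" where
  "Fp q \<alpha> lam = of_real (\<alpha> / ((1 - \<alpha>) * real q)) * Fm \<alpha> lam"

definition Fpt :: "nat \<Rightarrow> real \<Rightarrow> complex \<Rightarrow> complex" where
  "Fpt q \<alpha> lam = of_real (\<alpha> / ((1 - \<alpha>) * real q)) * Fmt \<alpha> lam"

definition edge_w :: "complex \<Rightarrow> complex \<Rightarrow> (nat \<Rightarrow> nat) \<Rightarrow> nat list \<Rightarrow> nat list \<Rightarrow> complex" where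
  "edge_w Fplus Fminus \<omega> u v = (if hor v \<omega> = hor u \<omega> + 1 then Fplus else Fminus)"

text \<open>Multiplicative extension along the geodesic from x up to x /\ y and down to y
  (empty product = 1 on the diagonal).\<close>
definition geo_w :: "(nat list \<Rightarrow> nat list \<Rightarrow> complex) \<Rightarrow> nat list \<Rightarrow> nat list \<Rightarrow> complex" where
  "geo_w W x y = (let c = lcp x y in
      (\<Prod>k\<in>{length c..<length x}. W (take (Suc k) x) (take k x)) *
      (\<Prod>k\<in>{length c..<length y}. W (take k y) (take (Suc k) y)))"

definition fw :: "nat \<Rightarrow> real \<Rightarrow> (nat \<Rightarrow> nat) \<Rightarrow> complex \<Rightarrow> nat list \<Rightarrow> nat list \<Rightarrow> complex" where
  "fw q \<alpha> \<omega> lam = geo_w (edge_w (Fp q \<alpha> lam) (Fm \<alpha> lam) \<omega>)"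

definition fwt :: "nat \<Rightarrow> real \<Rightarrow> (nat \<Rightarrow> nat) \<Rightarrow> complex \<Rightarrow> nat list \<Rightarrow> nat list \<Rightarrow> complex" where
  "fwt q \<alpha> \<omega> lam = geo_w (edge_w (Fpt q \<alpha> lam) (Fmt \<alpha> lam) \<omega>)"

definition Kker :: "nat \<Rightarrow> real \<Rightarrow> (nat \<Rightarrow> nat) \<Rightarrow> complex \<Rightarrow> nat list \<Rightarrow> (nat \<Rightarrow> nat) \<Rightarrow> complex" where
  "Kker q \<alpha> \<omega> lam x w = fw q \<alpha> \<omega> lam x (confE x w) / fw q \<alpha> \<omega> lam [] (confE x w)"

definition Kkert :: "nat \<Rightarrow> real \<Rightarrow> (nat \<Rightarrow> nat) \<Rightarrow> complex \<Rightarrow> nat list \<Rightarrow> (nat \<Rightarrow> nat) \<Rightarrow> complex" where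
  "Kkert q \<alpha> \<omega> lam x w = fwt q \<alpha> \<omega> lam x (confE x w) / fwt q \<alpha> \<omega> lam [] (confE x w)"

definition basic_sets :: "nat \<Rightarrow> (nat \<Rightarrow> nat) set set" where
  "basic_sets q = {tarc q x - \<Union> (tarc q ` S) | x S. x \<in> verts q \<and> finite S \<and> S \<subseteq> children q x}"

definition bdry_alg :: "nat \<Rightarrow> (nat \<Rightarrow> nat) set set" where
  "bdry_alg q = {\<Union> F | F. finite F \<and> F \<subseteq> basic_sets q \<and> disjoint F}"

definition distribution :: "nat \<Rightarrow> ((nat \<Rightarrow> nat) set \<Rightarrow> complex) \<Rightarrow> bool" where
  "distribution q \<nu> \<longleftrightarrow>
     (\<forall>A\<in>bdry_alg q. \<forall>B\<in>bdry_alg q. A \<inter> B = {} \<longrightarrow> \<nu> (A \<union> B) = \<nu> A + \<nu> B)"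

definition strong_distribution :: "nat \<Rightarrow> ((nat \<Rightarrow> nat) set \<Rightarrow> complex) \<Rightarrow> bool" where
  "strong_distribution q \<nu> \<longleftrightarrow> distribution q \<nu> \<and>
     (\<forall>x\<in>verts q. (\<lambda>y. norm (\<nu> (tarc q y))) summable_on children q x)"

definition tlevel :: "nat \<Rightarrow> nat \<Rightarrow> nat list set" where
  "tlevel q N = {y \<in> verts q. length y = N}"

definition dist_integral :: "nat \<Rightarrow> ((nat \<Rightarrow> nat) set \<Rightarrow> complex) \<Rightarrow> ((nat \<Rightarrow> nat) \<Rightarrow> complex) \<Rightarrow> complex" where
  "dist_integral q \<nu> f =
     (let N = (LEAST N. \<forall>y\<in>tlevel q N. \<forall>\<xi>\<in>tarc q y. \<forall>\<eta>\<in>tarc q y. f \<xi> = f \<eta>)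
      in \<Sum>y\<in>tlevel q N. f (SOME \<xi>. \<xi> \<in> tarc q y) * \<nu> (tarc q y))"

definition complex_measure_on :: "'a measure \<Rightarrow> ('a set \<Rightarrow> complex) \<Rightarrow> bool" where
  "complex_measure_on M \<mu> \<longleftrightarrow> \<mu> {} = 0 \<and>
     (\<forall>A :: nat \<Rightarrow> 'a set. range A \<subseteq> sets M \<longrightarrow> disjoint_family A \<longrightarrow>
        (\<lambda>n. \<mu> (A n)) sums \<mu> (\<Union>n. A n))"

definition extends_to_borel :: "nat \<Rightarrow> ((nat \<Rightarrow> nat) set \<Rightarrow> complex) \<Rightarrow> bool" where
  "extends_to_borel q \<nu> \<longleftrightarrow>
     (\<exists>\<mu>. complex_measure_on (bdry_borel q) \<mu> \<and> (\<forall>A\<in>bdry_alg q. \<mu> A = \<nu> A))"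

definition Hset :: "nat \<Rightarrow> real \<Rightarrow> (nat \<Rightarrow> nat) \<Rightarrow> real \<Rightarrow> (nat list \<Rightarrow> real) set" where
  "Hset q \<alpha> \<omega> lam = {h. (\<forall>x\<in>verts q. h x > 0) \<and> (\<forall>x. x \<notin> verts q \<longrightarrow> h x = 0) \<and> h [] = 1 \<and>
      (\<forall>x\<in>verts q. (\<Sum>y\<in>nbrs q x. trans_prob q \<alpha> \<omega> x y * h y) = lam * h x)}"

definition minimal_in :: "(nat list \<Rightarrow> real) set \<Rightarrow> (nat list \<Rightarrow> real) \<Rightarrow> bool" where
  "minimal_in H h \<longleftrightarrow> h \<in> H \<and>
     (\<forall>h1\<in>H. \<forall>h2\<in>H. \<forall>t::real. 0 < t \<and> t < 1 \<and> h = (\<lambda>x. t * h1 x + (1 - t) * h2 x) \<longrightarrow> h1 = h2)"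

end

theory Submission
  imports Defs
begin


lemma lcp_iff: "n \<le> length (lcp x y) \<longleftrightarrow> n \<le> length x \<and> n \<le> length y \<and> take n x = take n y"
proof (induction x y arbitrary: n rule: lcp.induct)
  case (1 a xs b ys)
  then show ?case by (cases n) auto
qed auto

lemma lcp_take1: "lcp x y = take (length (lcp x y)) x"
  by (induction x y rule: lcp.induct) auto

lemma lcp_take2: "lcp x y = take (length (lcp x y)) y"
  by (induction x y rule: lcp.induct) auto

lemma lcp_len1: "length (lcp x y) \<le> length x" using lcp_iff by blast
lemma lcp_len2: "length (lcp x y) \<le> length y" using lcp_iff by blast

lemma lcp_eqI: "length c \<le> length x \<Longrightarrow> length c \<le> length y \<Longrightarrow> take (length c) x = c \<Longrightarrow>
   take (length c) y = c \<Longrightarrow> (length c = length x \<or> length c = length y \<or> x ! length c \<noteq> y ! length c)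
   \<Longrightarrow> lcp x y = c"
proof -
  assume a: "length c \<le> length x" "length c \<le> length y" "take (length c) x = c"
     "take (length c) y = c" "length c = length x \<or> length c = length y \<or> x ! length c \<noteq> y ! length c"
  have le: "length c \<le> length (lcp x y)" using a lcp_iff by auto
  have ge: "length (lcp x y) \<le> length c"
  proof (rule ccontr)
    assume "\<not> ?thesis"
    then have "Suc (length c) \<le> length (lcp x y)" by simp
    then have s: "Suc (length c) \<le> length x" "Suc (length c) \<le> length y"
      "take (Suc (length c)) x = take (Suc (length c)) y" using lcp_iff by blast+
    then have "x ! length c = y ! length c"
      by (metis lessI nth_take Suc_le_eq)
    with a s show False by auto
  qed
  show ?thesis using le ge lcp_take1[of x y] a(3) by (metis le_antisym)
qed

lemma lcp_self[simp]: "lcp x x = x"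
  by (induction x) auto

lemma take_len_le: "take (length c) x = c \<Longrightarrow> length c \<le> length x"
proof -
  assume "take (length c) x = c"
  then have "length (take (length c) x) = length c" by simp
  then have "min (length c) (length x) = length c" by simp
  then show ?thesis by linarith
qed

lemma lcp_prefix1: "take (length c) x = c \<Longrightarrow> lcp x c = c"
  using take_len_le[of c x] by (intro lcp_eqI) auto

lemma lcp_prefix2: "take (length c) x = c \<Longrightarrow> lcp c x = c"
  using take_len_le[of c x] by (intro lcp_eqI) auto

lemma lcp_take_prefix: "take (length (lcp x y)) x = lcp x y"
  by (metis lcp_take1)

lemma lcp_same_len_neq: "length x = length y \<Longrightarrow> x \<noteq> y \<Longrightarrow> length (lcp x y) < length x"
  by (metis lcp_iff le_neq_implies_less order_refl take_all lcp_len1)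

lemma lcp_snoc: "length p = length w \<Longrightarrow>
   lcp (p @ [b]) (w @ [c]) = (if p = w \<and> b = c then p @ [b] else lcp p w)"
proof -
  assume l: "length p = length w"
  show ?thesis
  proof (cases "p = w \<and> b = c")
    case True then show ?thesis by simp
  next
    case False
    have A: "n \<le> length (lcp (p @ [b]) (w @ [c])) \<longleftrightarrow> n \<le> length (lcp p w)" for n
    proof -
      have "n \<le> length (lcp (p @ [b]) (w @ [c])) \<longleftrightarrow> n \<le> Suc (length p) \<and> take n (p@[b]) = take n (w@[c])"
        using l by (simp add: lcp_iff)
      also have "\<dots> \<longleftrightarrow> n \<le> length p \<and> take n p = take n w"
      proof (cases "n \<le> length p")
        case True then show ?thesis using l by simp
      next
        case f: False
        show ?thesis
        proof
          assume "n \<le> Suc (length p) \<and> take n (p@[b]) = take n (w@[c])"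
          then have "n = Suc (length p)" "p @ [b] = w @ [c]" using f l by auto
          then show "n \<le> length p \<and> take n p = take n w" using False l by auto
        qed (use f in auto)
      qed
      also have "\<dots> \<longleftrightarrow> n \<le> length (lcp p w)" using l by (simp add: lcp_iff)
      finally show ?thesis .
    qed
    have "length (lcp (p @ [b]) (w @ [c])) = length (lcp p w)"
      using A by (meson le_antisym order_refl)
    moreover have "lcp (p @ [b]) (w @ [c]) = take (length (lcp (p @ [b]) (w @ [c]))) p"
      by (metis lcp_take1 lcp_len1 calculation take_append append.right_neutral diff_is_0_eq take0)
    ultimately show ?thesis using False by (metis lcp_take1)
  qed
qed

lemma length_pref[simp]: "length (pref \<xi> n) = n" by (simp add: pref_def)
lemma pref_Suc: "pref \<xi> (Suc n) = pref \<xi> n @ [\<xi> n]" by (simp add: pref_def)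
lemma take_pref: "take k (pref \<xi> n) = pref \<xi> (min k n)"
  by (cases "k \<le> n") (simp_all add: pref_def take_map min_def take_upt)
lemma nth_pref: "i < n \<Longrightarrow> pref \<xi> n ! i = \<xi> i" by (simp add: pref_def)
lemma pref_0[simp]: "pref \<xi> 0 = []" by (simp add: pref_def)

lemma pref_verts: "\<xi> \<in> ends q \<Longrightarrow> pref \<xi> n \<in> verts q"
  by (auto simp: verts_def ends_def nth_pref)

lemma verts_take: "x \<in> verts q \<Longrightarrow> take k x \<in> verts q"
  by (auto simp: verts_def)

lemma verts_butlast: "x \<in> verts q \<Longrightarrow> butlast x \<in> verts q"
  by (metis butlast_conv_take verts_take)

lemma verts_Nil[simp]: "[] \<in> verts q" by (simp add: verts_def)

lemma verts_snoc: "p @ [b] \<in> verts q \<longleftrightarrow> p \<in> verts q \<and> b \<le> q \<and> (p = [] \<or> b \<noteq> last p)"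
proof
  assume a: "p @ [b] \<in> verts q"
  have "p \<in> verts q" using verts_take[OF a, of "length p"] by simp
  moreover have "b \<le> q" using a unfolding verts_def
    by (metis (no_types, lifting) length_append_singleton lessI mem_Collect_eq nth_append_length)
  moreover have "p = [] \<or> b \<noteq> last p"
  proof (cases "p = []")
    case False
    then obtain i where i: "Suc i = length p" by (metis length_greater_0_conv Suc_pred)
    have "Suc i < length (p@[b])" using i by simp
    then have "(p@[b]) ! Suc i \<noteq> (p@[b]) ! i" using a unfolding verts_def by blast
    moreover have "(p@[b]) ! Suc i = b" using i by (metis nth_append_length)
    moreover have "(p@[b]) ! i = last p" using i False
      by (metis diff_Suc_1 last_conv_nth lessI nth_append)
    ultimately show ?thesis by auto
  qed simp
  ultimately show "p \<in> verts q \<and> b \<le> q \<and> (p = [] \<or> b \<noteq> last p)" by blast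
next
  assume a: "p \<in> verts q \<and> b \<le> q \<and> (p = [] \<or> b \<noteq> last p)"
  have 1: "\<forall>i<length (p@[b]). (p@[b]) ! i \<le> q"
  proof (intro allI impI)
    fix i assume "i < length (p@[b])"
    then show "(p@[b]) ! i \<le> q" using a unfolding verts_def
      by (cases "i < length p") (auto simp: nth_append)
  qed
  have 2: "\<forall>i. Suc i < length (p@[b]) \<longrightarrow> (p@[b]) ! Suc i \<noteq> (p@[b]) ! i"
  proof (intro allI impI)
    fix i assume i: "Suc i < length (p@[b])"
    show "(p@[b]) ! Suc i \<noteq> (p@[b]) ! i"
    proof (cases "Suc i < length p")
      case True then show ?thesis using a unfolding verts_def by (auto simp: nth_append)
    next
      case False
      then have "Suc i = length p" using i by simp
      moreover have "last p = p ! i" using \<open>Suc i = length p\<close>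
        by (metis diff_Suc_1 last_conv_nth list.size(3) nat.distinct(1))
      ultimately show ?thesis using a by (auto simp: nth_append)
    qed
  qed
  show "p @ [b] \<in> verts q" using 1 2 unfolding verts_def by blast
qed

lemma tarc_iff: "\<eta> \<in> tarc q y \<longleftrightarrow> \<eta> \<in> ends q \<and> pref \<eta> (length y) = y"
  by (simp add: tarc_def)

lemma tarc_Nil: "tarc q [] = ends q" by (auto simp: tarc_def)

lemma tarc_sub: "\<eta> \<in> tarc q y \<Longrightarrow> k \<le> length y \<Longrightarrow> \<eta> \<in> tarc q (take k y)"
  by (auto simp: tarc_iff take_pref min_def) (metis take_pref min_def)

lemma confE_tarc: "\<eta> \<in> tarc q y \<Longrightarrow> length x \<le> length y \<Longrightarrow> confE x \<eta> = lcp x (take (length x) y)"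
  by (auto simp: confE_def tarc_iff take_pref min_def) (metis take_pref min_def)

lemma tarc_disj: "length y = length y' \<Longrightarrow> y \<noteq> y' \<Longrightarrow> tarc q y \<inter> tarc q y' = {}"
  by (auto simp: tarc_iff)

lemma tarc_disj': "length y \<le> length y' \<Longrightarrow> take (length y) y' \<noteq> y \<Longrightarrow> tarc q y \<inter> tarc q y' = {}"
  by (auto simp: tarc_iff) (metis take_pref min_def)

lemma tarc_mono: "take (length y) y' = y \<Longrightarrow> length y \<le> length y' \<Longrightarrow> tarc q y' \<subseteq> tarc q y"
  using tarc_sub by (metis subsetI)

lemma hor_snoc: "hor (p @ [b]) \<omega> = (if p @ [b] = pref \<omega> (Suc (length p)) then hor p \<omega> - 1 else hor p \<omega> + 1)"
proof -
  have c1: "confE (p@[b]) \<omega> = lcp (p@[b]) (pref \<omega> (length p) @ [\<omega> (length p)])"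
    by (simp add: confE_def pref_Suc)
  have c0: "confE p \<omega> = lcp p (pref \<omega> (length p))" by (simp add: confE_def)
  show ?thesis
  proof (cases "p @ [b] = pref \<omega> (Suc (length p))")
    case True
    then have "p = pref \<omega> (length p)" "b = \<omega> (length p)" by (auto simp: pref_Suc)
    then show ?thesis using c1 c0 True by (simp add: hor_def)
  next
    case False
    then have "\<not> (p = pref \<omega> (length p) \<and> b = \<omega> (length p))" by (auto simp: pref_Suc)
    then have "confE (p@[b]) \<omega> = confE p \<omega>" using c1 c0 lcp_snoc[of p "pref \<omega> (length p)" b] by simp
    then show ?thesis using False by (simp add: hor_def)
  qed
qed


definition ext_end :: "nat list \<Rightarrow> nat \<Rightarrow> nat" where
  "ext_end y n = (let a = (if y \<noteq> [] \<and> last y = 0 then 1 else 0) in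
     if n < length y then y ! n else if even (n - length y) then a else 1 - a)"

lemma ext_end_tarc: assumes q: "q \<ge> 1" and y: "y \<in> verts q" shows "ext_end y \<in> tarc q y"
proof -
  define a where "a = (if y \<noteq> [] \<and> last y = 0 then 1 else (0::nat))"
  have e: "ext_end y n = (if n < length y then y ! n else if even (n - length y) then a else 1 - a)" for n
    by (simp add: ext_end_def a_def Let_def)
  have a1: "a \<le> 1" by (simp add: a_def)
  have le: "ext_end y n \<le> q" for n
    using y q a1 by (auto simp: e verts_def)
  have ne: "ext_end y (Suc n) \<noteq> ext_end y n" for n
  proof (cases "Suc n < length y")
    case True then show ?thesis using y by (auto simp: e verts_def)
  next
    case False
    show ?thesis
    proof (cases "n < length y")
      case True
      then have n: "Suc n = length y" using False by simp
      then have "y ! n = last y" by (metis diff_Suc_1 last_conv_nth list.size(3) nat.distinct(1))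
      then show ?thesis using n True by (auto simp: e a_def)
    next
      case False
      define m where "m = n - length y"
      have s: "Suc n - length y = Suc m" using False by (simp add: m_def)
      have "a \<noteq> 1 - a" using a1 by arith
      have e1: "ext_end y (Suc n) = (if even (Suc m) then a else 1 - a)"
        using False s by (simp add: e)
      have e2: "ext_end y n = (if even m then a else 1 - a)" using False by (simp add: e m_def)
      have "1 - a \<noteq> a" using \<open>a \<noteq> 1 - a\<close> by metis
      then show ?thesis using \<open>a \<noteq> 1 - a\<close> unfolding e1 e2 by (cases "even m") simp_all
    qed
  qed
  have "pref (ext_end y) (length y) = y"
  proof (rule nth_equalityI)
    fix i assume "i < length (pref (ext_end y) (length y))"
    then have "i < length y" by simp
    then show "pref (ext_end y) (length y) ! i = y ! i" by (simp add: nth_pref e)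
  qed simp
  then show ?thesis using le ne by (simp add: tarc_iff ends_def)
qed

lemma tarc_nonempty: "q \<ge> 1 \<Longrightarrow> y \<in> verts q \<Longrightarrow> tarc q y \<noteq> {}"
  using ext_end_tarc by blast

lemma children_eq: "children q x = (\<lambda>b. x @ [b]) ` {b. x @ [b] \<in> verts q}"
  by (auto simp: children_def)

lemma finite_children: "finite (children q x)"
proof -
  have "children q x \<subseteq> (\<lambda>b. x @ [b]) ` {..q}"
    by (auto simp: children_def verts_snoc)
  then show ?thesis by (rule finite_subset) simp
qed

lemma children_len: "c \<in> children q x \<Longrightarrow> length c = Suc (length x)"
  by (auto simp: children_def)

lemma children_take: "c \<in> children q x \<Longrightarrow> take (length x) c = x"
  by (auto simp: children_def)

lemma tarc_children: "x \<in> verts q \<Longrightarrow> tarc q x = (\<Union>c\<in>children q x. tarc q c)"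
proof
  assume x: "x \<in> verts q"
  show "tarc q x \<subseteq> (\<Union>c\<in>children q x. tarc q c)"
  proof
    fix \<eta> assume e: "\<eta> \<in> tarc q x"
    then have "pref \<eta> (length x) = x" "\<eta> \<in> ends q" by (auto simp: tarc_iff)
    then have "pref \<eta> (Suc (length x)) = x @ [\<eta> (length x)]" by (simp add: pref_Suc)
    moreover have "pref \<eta> (Suc (length x)) \<in> verts q" using \<open>\<eta> \<in> ends q\<close> by (rule pref_verts)
    ultimately have "x @ [\<eta> (length x)] \<in> children q x" "\<eta> \<in> tarc q (x @ [\<eta> (length x)])"
      using \<open>\<eta> \<in> ends q\<close> by (auto simp: children_def tarc_iff)
    then show "\<eta> \<in> (\<Union>c\<in>children q x. tarc q c)" by blast
  qed
next
  show "(\<Union>c\<in>children q x. tarc q c) \<subseteq> tarc q x"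
    using tarc_mono children_take children_len by (metis UN_least le_SucI order_refl)
qed

lemma tlevel_Suc: "tlevel q (Suc N) = (\<Union>y\<in>tlevel q N. children q y)"
proof
  show "tlevel q (Suc N) \<subseteq> (\<Union>y\<in>tlevel q N. children q y)"
  proof
    fix c assume c: "c \<in> tlevel q (Suc N)"
    then have "c \<noteq> []" by (auto simp: tlevel_def)
    then have "c = butlast c @ [last c]" by simp
    moreover have "butlast c \<in> tlevel q N" using c by (auto simp: tlevel_def verts_butlast)
    ultimately show "c \<in> (\<Union>y\<in>tlevel q N. children q y)" using c
      by (auto simp: children_def tlevel_def)
  qed
qed (auto simp: tlevel_def children_def)

lemma finite_tlevel: "finite (tlevel q N)"
proof -
  have "tlevel q N \<subseteq> {xs. set xs \<subseteq> {..q} \<and> length xs = N}"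
    by (auto simp: tlevel_def verts_def in_set_conv_nth)
  then show ?thesis by (rule finite_subset) (rule finite_lists_length_eq, simp)
qed

lemma children_disj: "y \<noteq> y' \<Longrightarrow> children q y \<inter> children q y' = {}"
  by (auto simp: children_def)

lemma children_verts: "c \<in> children q x \<Longrightarrow> c \<in> verts q" by (simp add: children_def)

lemma arc_basic: "x \<in> verts q \<Longrightarrow> tarc q x \<in> basic_sets q"
  unfolding basic_sets_def by (rule CollectI, rule exI[of _ x], rule exI[of _ "{}"]) auto

lemma arc_union_alg:
  assumes "x \<in> verts q" "S \<subseteq> children q x"
  shows "(\<Union>c\<in>S. tarc q c) \<in> bdry_alg q"
proof -
  have fin: "finite (tarc q ` S)" using finite_children assms(2) finite_subset by blast
  have sub: "tarc q ` S \<subseteq> basic_sets q" using assms children_verts arc_basic by blast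
  have dis: "disjoint (tarc q ` S)"
  proof (rule disjointI)
    fix A B assume "A \<in> tarc q ` S" "B \<in> tarc q ` S" "A \<noteq> B"
    then obtain c c' where "c \<in> S" "c' \<in> S" "A = tarc q c" "B = tarc q c'" "c \<noteq> c'" by blast
    moreover have "length c = length c'" using \<open>c \<in> S\<close> \<open>c' \<in> S\<close> children_len assms(2) by (metis subsetD)
    ultimately show "A \<inter> B = {}" using tarc_disj[of c c' q] by auto
  qed
  show ?thesis unfolding bdry_alg_def using fin sub dis by blast
qed

lemma arc_alg: "x \<in> verts q \<Longrightarrow> tarc q x \<in> bdry_alg q"
proof -
  assume x: "x \<in> verts q"
  have "{tarc q x} \<subseteq> basic_sets q" using arc_basic[OF x] by simp
  moreover have "disjoint {tarc q x}" by (simp add: disjoint_def)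
  ultimately show ?thesis unfolding bdry_alg_def by (metis (mono_tags, lifting) CollectI Union_insert
      Sup_empty finite.emptyI finite.insertI sup_bot.right_neutral)
qed

lemma empty_alg: "{} \<in> bdry_alg q"
  unfolding bdry_alg_def by (rule CollectI, rule exI[of _ "{}"]) (auto simp: disjoint_def)

lemma dist_empty: "distribution q \<nu> \<Longrightarrow> \<nu> {} = 0"
  using empty_alg[of q] unfolding distribution_def by (metis Un_empty add_cancel_right_right inf_bot_left)

lemma dist_children_sum:
  assumes d: "distribution q \<nu>" and x: "x \<in> verts q" and S: "S \<subseteq> children q x"
  shows "\<nu> (\<Union>c\<in>S. tarc q c) = (\<Sum>c\<in>S. \<nu> (tarc q c))"
proof -
  have "finite S" using S finite_children finite_subset by blast
  then show ?thesis using S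
  proof (induction S rule: finite_induct)
    case empty then show ?case using dist_empty[OF d] by simp
  next
    case (insert a S)
    have e: "(\<Union>c\<in>insert a S. tarc q c) = tarc q a \<union> (\<Union>c\<in>S. tarc q c)" by simp
    have dj: "tarc q a \<inter> (\<Union>c\<in>S. tarc q c) = {}"
      using insert tarc_disj[of a _ q] children_len by (auto, metis IntI empty_iff subsetD)
    have A: "tarc q a \<in> bdry_alg q" using insert children_verts arc_alg by blast
    have B: "(\<Union>c\<in>S. tarc q c) \<in> bdry_alg q" using insert arc_union_alg[OF x] by blast
    have "\<nu> (\<Union>c\<in>insert a S. tarc q c) = \<nu> (tarc q a) + \<nu> (\<Union>c\<in>S. tarc q c)"
      using d A B dj unfolding distribution_def e by blast
    then show ?case using insert by simp
  qed
qed

lemma dist_split: "distribution q \<nu> \<Longrightarrow> x \<in> verts q \<Longrightarrow> \<nu> (tarc q x) = (\<Sum>c\<in>children q x. \<nu> (tarc q c))"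
  using dist_children_sum[of q \<nu> x "children q x"] tarc_children[of x q] by simp

definition rep :: "nat \<Rightarrow> nat list \<Rightarrow> (nat \<Rightarrow> nat)" where
  "rep q y = (SOME \<eta>. \<eta> \<in> tarc q y)"

lemma rep_in: "q \<ge> 1 \<Longrightarrow> y \<in> verts q \<Longrightarrow> rep q y \<in> tarc q y"
  unfolding rep_def using tarc_nonempty by (metis ex_in_conv someI_ex)

definition lsum :: "nat \<Rightarrow> ((nat \<Rightarrow> nat) set \<Rightarrow> complex) \<Rightarrow> ((nat \<Rightarrow> nat) \<Rightarrow> complex) \<Rightarrow> nat \<Rightarrow> complex" where
  "lsum q \<nu> F N = (\<Sum>y\<in>tlevel q N. F (rep q y) * \<nu> (tarc q y))"

definition lconst :: "nat \<Rightarrow> ((nat \<Rightarrow> nat) \<Rightarrow> complex) \<Rightarrow> nat \<Rightarrow> bool" where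
  "lconst q F N \<longleftrightarrow> (\<forall>y\<in>tlevel q N. \<forall>\<eta>\<in>tarc q y. \<forall>\<eta>'\<in>tarc q y. F \<eta> = F \<eta>')"

lemma lconst_Suc: "lconst q F N \<Longrightarrow> lconst q F (Suc N)"
  unfolding lconst_def
proof (intro ballI)
  fix c \<eta> \<eta>' assume a: "\<forall>y\<in>tlevel q N. \<forall>\<eta>\<in>tarc q y. \<forall>\<eta>'\<in>tarc q y. F \<eta> = F \<eta>'"
    and c: "c \<in> tlevel q (Suc N)" and e: "\<eta> \<in> tarc q c" "\<eta>' \<in> tarc q c"
  obtain y where y: "y \<in> tlevel q N" "c \<in> children q y" using c tlevel_Suc by blast
  have "tarc q c \<subseteq> tarc q y" using y children_take children_len tarc_mono by (metis le_SucI order_refl)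
  then show "F \<eta> = F \<eta>'" using a y e by blast
qed

lemma lconst_mono: "N \<le> M \<Longrightarrow> lconst q F N \<Longrightarrow> lconst q F M"
  by (induction M rule: dec_induct) (auto intro: lconst_Suc)

lemma lsum_Suc:
  assumes q: "q \<ge> 1" and d: "distribution q \<nu>" and c: "lconst q F N"
  shows "lsum q \<nu> F (Suc N) = lsum q \<nu> F N"
proof -
  have "lsum q \<nu> F (Suc N) = (\<Sum>y\<in>tlevel q N. \<Sum>c\<in>children q y. F (rep q c) * \<nu> (tarc q c))"
    unfolding lsum_def tlevel_Suc
    by (rule sum.UNION_disjoint) (simp_all add: finite_tlevel finite_children children_disj)
  also have "\<dots> = (\<Sum>y\<in>tlevel q N. F (rep q y) * (\<Sum>c\<in>children q y. \<nu> (tarc q c)))"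
  proof (rule sum.cong[OF refl])
    fix y assume y: "y \<in> tlevel q N"
    have yv: "y \<in> verts q" using y by (simp add: tlevel_def)
    have "F (rep q c) = F (rep q y)" if "c \<in> children q y" for c
    proof -
      have "tarc q c \<subseteq> tarc q y" using that children_take children_len tarc_mono by (metis le_SucI order_refl)
      then show ?thesis using rep_in[OF q] children_verts that yv c y unfolding lconst_def by blast
    qed
    then show "(\<Sum>c\<in>children q y. F (rep q c) * \<nu> (tarc q c)) = F (rep q y) * (\<Sum>c\<in>children q y. \<nu> (tarc q c))"
      by (simp add: sum_distrib_left)
  qed
  also have "\<dots> = lsum q \<nu> F N"
    unfolding lsum_def using dist_split[OF d] by (auto simp: tlevel_def intro!: sum.cong)
  finally show ?thesis .
qed

lemma lsum_mono:
  assumes q: "q \<ge> 1" and d: "distribution q \<nu>" and c: "lconst q F N" and NM: "N \<le> M"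
  shows "lsum q \<nu> F M = lsum q \<nu> F N"
  using NM
proof (induction M rule: dec_induct)
  case (step n)
  then show ?case using lsum_Suc[OF q d lconst_mono[OF step(1) c]] by simp
qed simp

lemma dist_integral_eq:
  assumes q: "q \<ge> 1" and d: "distribution q \<nu>" and c: "lconst q F N"
  shows "dist_integral q \<nu> F = lsum q \<nu> F N"
proof -
  define P where "P = (\<lambda>N. \<forall>y\<in>tlevel q N. \<forall>\<xi>\<in>tarc q y. \<forall>\<eta>\<in>tarc q y. F \<xi> = F \<eta>)"
  define N0 where "N0 = Least P"
  have PN: "P N" using c unfolding lconst_def P_def by blast
  have c0: "lconst q F N0" using LeastI[of P N, OF PN] unfolding N0_def lconst_def P_def by blast
  have le: "N0 \<le> N" unfolding N0_def using Least_le[of P N, OF PN] .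
  have "dist_integral q \<nu> F = lsum q \<nu> F N0"
    unfolding dist_integral_def lsum_def rep_def N0_def P_def by simp
  also have "\<dots> = lsum q \<nu> F N" using lsum_mono[OF q d c0 le] by simp
  finally show ?thesis .
qed

lemma lconst_confE: "length z \<le> N \<Longrightarrow> lconst q (\<lambda>\<eta>. G (confE z \<eta>)) N"
  unfolding lconst_def tlevel_def using confE_tarc by (metis (mono_tags, lifting) mem_Collect_eq)

lemma confE_rep: "q \<ge> 1 \<Longrightarrow> y \<in> verts q \<Longrightarrow> length z \<le> length y \<Longrightarrow> confE z (rep q y) = lcp z (take (length z) y)"
  using confE_tarc rep_in by blast


lemma geo_prefix: "take (length c) x = c \<Longrightarrow>
   geo_w W x c = (\<Prod>k\<in>{length c..<length x}. W (take (Suc k) x) (take k x))"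
  by (simp add: geo_w_def lcp_prefix1 Let_def)

lemma geo_root: "geo_w W [] y = (\<Prod>k\<in>{0..<length y}. W (take k y) (take (Suc k) y))"
  by (simp add: geo_w_def Let_def)

lemma geo_self[simp]: "geo_w W x x = 1"
  by (simp add: geo_w_def Let_def)

lemma geo_root_snoc: "geo_w W [] (p @ [b]) = geo_w W [] p * W p (p @ [b])"
proof -
  have "geo_w W [] (p @ [b]) = (\<Prod>k\<in>{0..<Suc (length p)}. W (take k (p@[b])) (take (Suc k) (p@[b])))"
    by (simp add: geo_root)
  also have "\<dots> = (\<Prod>k\<in>{0..<length p}. W (take k (p@[b])) (take (Suc k) (p@[b]))) * W p (p @ [b])"
    by simp
  also have "(\<Prod>k\<in>{0..<length p}. W (take k (p@[b])) (take (Suc k) (p@[b]))) = geo_w W [] p"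
    unfolding geo_root by (rule prod.cong) auto
  finally show ?thesis .
qed

lemma geo_up_snoc: assumes "take (length c) p = c"
  shows "geo_w W (p @ [b]) c = W (p @ [b]) p * geo_w W p c"
proof -
  have l: "length c \<le> length p" using take_len_le[OF assms] .
  have c2: "take (length c) (p @ [b]) = c" using assms l by simp
  have "geo_w W (p @ [b]) c = (\<Prod>k\<in>{length c..<Suc (length p)}. W (take (Suc k) (p@[b])) (take k (p@[b])))"
    using geo_prefix[OF c2] by simp
  also have "\<dots> = (\<Prod>k\<in>{length c..<length p}. W (take (Suc k) (p@[b])) (take k (p@[b]))) * W (p @ [b]) p"
    using l by (simp add: prod.atLeastLessThan_Suc)
  also have "(\<Prod>k\<in>{length c..<length p}. W (take (Suc k) (p@[b])) (take k (p@[b]))) = geo_w W p c"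
    unfolding geo_prefix[OF assms] by (rule prod.cong) auto
  finally show ?thesis by simp
qed

lemma geo_edge_up: "geo_w W (p @ [b]) p = W (p @ [b]) p"
  using geo_up_snoc[of p p W b] by simp

lemma geo_nz: "\<forall>u v. W u v \<noteq> 0 \<Longrightarrow> geo_w W x y \<noteq> 0"
  by (simp add: geo_w_def Let_def)

definition Kg :: "(nat list \<Rightarrow> nat list \<Rightarrow> complex) \<Rightarrow> nat list \<Rightarrow> (nat \<Rightarrow> nat) \<Rightarrow> complex" where
  "Kg W x \<eta> = geo_w W x (confE x \<eta>) / geo_w W [] (confE x \<eta>)"

lemma Kker_Kg: "Kker q \<alpha> \<omega> lam = Kg (edge_w (Fp q \<alpha> lam) (Fm \<alpha> lam) \<omega>)"
  by (auto simp: Kker_def Kg_def fw_def fun_eq_iff)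

lemma Kkert_Kg: "Kkert q \<alpha> \<omega> lam = Kg (edge_w (Fpt q \<alpha> lam) (Fmt \<alpha> lam) \<omega>)"
  by (auto simp: Kkert_def Kg_def fwt_def fun_eq_iff)

lemma confE_Nil[simp]: "confE [] \<eta> = []" by (simp add: confE_def)

lemma Kg_Nil[simp]: "Kg W [] \<eta> = 1" by (simp add: Kg_def)

lemma confE_on: "confE (pref \<xi> n) \<xi> = pref \<xi> n" by (simp add: confE_def)

lemma Kg_on: "Kg W (pref \<xi> n) \<xi> = 1 / geo_w W [] (pref \<xi> n)"
  by (simp add: Kg_def confE_on)

lemma confE_prefix: "take (length (confE x \<eta>)) x = confE x \<eta>"
  unfolding confE_def by (rule lcp_take_prefix)

lemma confE_off: assumes "p @ [b] \<noteq> pref \<xi> (Suc (length p))"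
  shows "confE (p @ [b]) \<xi> = confE p \<xi>"
proof -
  have "confE (p @ [b]) \<xi> = lcp (p@[b]) (pref \<xi> (length p) @ [\<xi> (length p)])"
    by (simp add: confE_def pref_Suc)
  also have "\<dots> = lcp p (pref \<xi> (length p))"
    using assms by (subst lcp_snoc) (auto simp: pref_Suc)
  finally show ?thesis by (simp add: confE_def)
qed

lemma Kg_off: assumes "p @ [b] \<noteq> pref \<xi> (Suc (length p))"
  shows "Kg W (p @ [b]) \<xi> = W (p @ [b]) p * Kg W p \<xi>"
  unfolding Kg_def confE_off[OF assms] using geo_up_snoc[OF confE_prefix[of p \<xi>], of W b] by simp

section \<open>The basic recursion\<close>

lemma lcp_snoc_neq: assumes "length y = Suc (length p)" "y \<noteq> p @ [b]"
  shows "lcp (p @ [b]) y = lcp p (take (length p) y)"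
proof -
  have "y \<noteq> []" using assms by auto
  then have y: "y = take (length p) y @ [last y]"
    using assms by (metis append_butlast_last_id butlast_conv_take diff_Suc_1)
  have "lcp (p @ [b]) (take (length p) y @ [last y]) = lcp p (take (length p) y)"
    using assms y by (subst lcp_snoc) auto
  then show ?thesis using y by metis
qed

lemma recursion:
  assumes q: "q \<ge> 1" and d: "distribution q \<nu>"
    and x: "p @ [b] \<in> verts q"
    and G: "\<forall>z\<in>verts q. G z = dist_integral q \<nu> (Kg W z)"
    and Wnz: "\<forall>u v. W u v \<noteq> 0"
  shows "\<nu> (tarc q (p @ [b])) * (1 - W (p @ [b]) p * W p (p @ [b])) / geo_w W [] (p @ [b])
       = G (p @ [b]) - W (p @ [b]) p * G p"
proof -
  define x where "x = p @ [b]"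
  define n where "n = length x"
  have pv: "p \<in> verts q" using x verts_snoc by blast
  have lconst: "lconst q (Kg W z) n" if "length z \<le> n" for z
    unfolding Kg_def using lconst_confE[OF that] .
  have Gx: "G x = lsum q \<nu> (Kg W x) n"
    using G x dist_integral_eq[OF q d lconst[of x]] by (simp add: x_def n_def)
  have Gp: "G p = lsum q \<nu> (Kg W p) n"
    using G pv dist_integral_eq[OF q d lconst[of p]] by (simp add: x_def n_def)
  have trm: "Kg W x (rep q y) - W x p * Kg W p (rep q y) =
      (if y = x then 1 / geo_w W [] x - W x p / geo_w W [] p else 0)" if y: "y \<in> tlevel q n" for y
  proof -
    have yv: "y \<in> verts q" and yl: "length y = n" using y by (auto simp: tlevel_def)
    have cx: "confE x (rep q y) = lcp x y" using confE_rep[OF q yv, of x] yl n_def by simp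
    have cp: "confE p (rep q y) = lcp p (take (length p) y)"
      using confE_rep[OF q yv, of p] yl n_def x_def by simp
    show ?thesis
    proof (cases "y = x")
      case True
      then have "confE x (rep q y) = x" "confE p (rep q y) = p"
        using cx cp by (auto simp: x_def lcp_prefix2)
      then show ?thesis using True by (simp add: Kg_def)
    next
      case False
      have e: "lcp x y = lcp p (take (length p) y)"
        using lcp_snoc_neq[of y p b] False yl by (simp add: x_def n_def)
      have k1: "Kg W x (rep q y) = geo_w W x (lcp x y) / geo_w W [] (lcp x y)" by (simp add: Kg_def cx)
      have k2: "Kg W p (rep q y) = geo_w W p (lcp x y) / geo_w W [] (lcp x y)" by (simp add: Kg_def cp e)
      have "Kg W x (rep q y) = W x p * Kg W p (rep q y)"
        unfolding k1 k2 e
        using geo_up_snoc[OF lcp_take_prefix[of p "take (length p) y"], of W b] by (simp add: x_def)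
      then show ?thesis using False by simp
    qed
  qed
  have "G x - W x p * G p = (\<Sum>y\<in>tlevel q n. (Kg W x (rep q y) - W x p * Kg W p (rep q y)) * \<nu> (tarc q y))"
    unfolding Gx Gp lsum_def by (simp add: sum_distrib_left algebra_simps sum_subtractf)
  also have "\<dots> = (\<Sum>y\<in>tlevel q n. (if y = x then (1 / geo_w W [] x - W x p / geo_w W [] p) * \<nu> (tarc q x) else 0))"
    by (rule sum.cong) (auto simp: trm)
  also have "\<dots> = (1 / geo_w W [] x - W x p / geo_w W [] p) * \<nu> (tarc q x)"
    using x by (subst sum.delta[OF finite_tlevel]) (simp add: tlevel_def n_def x_def)
  also have "\<dots> = \<nu> (tarc q x) * (1 - W x p * W p x) / geo_w W [] x"
    using geo_nz[OF Wnz, of "[]" p] Wnz by (simp add: x_def geo_root_snoc field_simps)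
  finally show ?thesis by (simp add: x_def)
qed


lemma edge_down: "edge_w Fpl Fmi \<omega> p (p @ [b]) = (if p @ [b] = pref \<omega> (Suc (length p)) then Fmi else Fpl)"
  by (simp add: edge_w_def hor_snoc)

lemma edge_up: "edge_w Fpl Fmi \<omega> (p @ [b]) p = (if p @ [b] = pref \<omega> (Suc (length p)) then Fpl else Fmi)"
  by (simp add: edge_w_def hor_snoc)

locale wpair =
  fixes q :: nat and \<omega> :: "nat \<Rightarrow> nat" and c a a' :: complex
  assumes q1: "q \<ge> 1" and a0: "a \<noteq> 0" and a'0: "a' \<noteq> 0" and ca: "c * a * a' = 1 / of_nat q"
begin

definition W where "W = edge_w (c * a) a \<omega>"
definition W' where "W' = edge_w (c * a') a' \<omega>"
definition r where "r = a / a'"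

lemma c0: "c \<noteq> 0" using ca q1 by auto

lemma Wnz: "\<forall>u v. W u v \<noteq> 0" using a0 c0 by (simp add: W_def edge_w_def)
lemma W'nz: "\<forall>u v. W' u v \<noteq> 0" using a'0 c0 by (simp add: W'_def edge_w_def)

lemma prod_WW: "W (p @ [b]) p * W p (p @ [b]) = c * a * a"
  by (simp add: W_def edge_down edge_up)

lemma prod_W'W: "W' (p @ [b]) p * W p (p @ [b]) = 1 / of_nat q"
  using ca by (simp add: W_def W'_def edge_down edge_up algebra_simps)

lemma diff_W: "(W' (p @ [b]) p - W (p @ [b]) p) * W p (p @ [b]) = c * a * (a' - a)"
  by (simp add: W_def W'_def edge_down edge_up algebra_simps)

lemma ratio_W: "W p (p @ [b]) / W' p (p @ [b]) = r"
  using c0 by (simp add: W_def W'_def edge_down r_def)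

lemma geo_ratio: "geo_w W [] y / geo_w W' [] y = r ^ length y"
proof (induction y rule: rev_induct)
  case Nil then show ?case by simp
next
  case (snoc b p)
  have "geo_w W [] (p @ [b]) / geo_w W' [] (p @ [b]) =
      (geo_w W [] p / geo_w W' [] p) * (W p (p @ [b]) / W' p (p @ [b]))"
    by (simp add: geo_root_snoc)
  then show ?case using snoc ratio_W by simp
qed

lemma pi_eq: "c * a * a = r / of_nat q"
proof -
  have "c * a * a = (c * a * a') * (a / a')" using a'0 by (simp add: field_simps)
  then show ?thesis using ca by (simp add: r_def)
qed

definition Q where "Q \<xi> p = Kg W' p \<xi> * geo_w W [] p"

lemma Q_on: "Q \<xi> (pref \<xi> n) = r ^ n"
  using geo_ratio[of "pref \<xi> n"] by (simp add: Q_def Kg_on)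

lemma Q_off: assumes "p @ [b] \<noteq> pref \<xi> (Suc (length p))"
  shows "Q \<xi> (p @ [b]) = Q \<xi> p / of_nat q"
proof -
  have "Q \<xi> (p @ [b]) = (W' (p @ [b]) p * W p (p @ [b])) * Q \<xi> p"
    unfolding Q_def Kg_off[OF assms] geo_root_snoc by (simp add: algebra_simps)
  then show ?thesis using prod_W'W by simp
qed

lemma confE_len_le: "length (confE p \<xi>) \<le> length p"
  unfolding confE_def using lcp_len1 by blast

lemma confE_eq_self: "length (confE p \<xi>) = length p \<Longrightarrow> p = pref \<xi> (length p)"
  unfolding confE_def by (metis lcp_iff order_refl take_all length_pref)

lemma Q_formula: "Q \<xi> p = r ^ length (confE p \<xi>) / of_nat q ^ (length p - length (confE p \<xi>))"
proof (induction p rule: rev_induct)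
  case Nil then show ?case by (simp add: Q_def)
next
  case (snoc b p)
  show ?case
  proof (cases "p @ [b] = pref \<xi> (Suc (length p))")
    case True
    then have "confE (p @ [b]) \<xi> = p @ [b]" using confE_on[of \<xi> "Suc (length p)"] by simp
    then show ?thesis using Q_on[of \<xi> "Suc (length p)"] True by simp
  next
    case False
    have e: "confE (p @ [b]) \<xi> = confE p \<xi>" using confE_off[OF False] .
    have l: "length (confE p \<xi>) \<le> length p" by (rule confE_len_le)
    have "Suc (length p) - length (confE p \<xi>) = Suc (length p - length (confE p \<xi>))" using l by simp
    then show ?thesis using Q_off[OF False] snoc e by simp
  qed
qed

context
  fixes \<nu> :: "(nat \<Rightarrow> nat) set \<Rightarrow> complex" and \<xi> :: "nat \<Rightarrow> nat"
  assumes d: "distribution q \<nu>"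
    and hyp: "\<forall>z\<in>verts q. Kg W' z \<xi> = dist_integral q \<nu> (Kg W z)"
begin

lemma rec_spec: "p @ [b] \<in> verts q \<Longrightarrow>
  \<nu> (tarc q (p @ [b])) * (1 - c * a * a) / geo_w W [] (p @ [b]) = Kg W' (p @ [b]) \<xi> - W (p @ [b]) p * Kg W' p \<xi>"
  using recursion[OF q1 d _ _ Wnz, of p b "\<lambda>z. Kg W' z \<xi>"] hyp prod_WW by simp

lemma nu_root: "\<nu> (tarc q []) = 1"
proof -
  have "1 = dist_integral q \<nu> (Kg W [])" using hyp by (metis Kg_Nil verts_Nil)
  also have "\<dots> = lsum q \<nu> (Kg W []) 0"
    by (rule dist_integral_eq[OF q1 d]) (simp add: lconst_def)
  also have "\<dots> = \<nu> (tarc q [])"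
  proof -
    have "tlevel q 0 = {[]}" by (auto simp: tlevel_def)
    then show ?thesis by (simp add: lsum_def)
  qed
  finally show ?thesis by simp
qed

lemma nu_on: assumes "\<xi> \<in> ends q"
  shows "\<nu> (tarc q (pref \<xi> (Suc m))) * (1 - c * a * a) = r ^ Suc m - c * a * a * r ^ m"
proof -
  let ?x = "pref \<xi> (Suc m)" and ?p = "pref \<xi> m"
  have x: "?x = ?p @ [\<xi> m]" by (simp add: pref_Suc)
  have xv: "?p @ [\<xi> m] \<in> verts q" using pref_verts[OF assms] x by metis
  have R: "\<nu> (tarc q ?x) * (1 - c * a * a) / geo_w W [] ?x = 1 / geo_w W' [] ?x - W ?x ?p / geo_w W' [] ?p"
    using rec_spec[OF xv] unfolding x[symmetric] by (simp add: Kg_on)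
  have g: "geo_w W [] ?x = geo_w W [] ?p * W ?p ?x" by (simp add: x geo_root_snoc)
  have "\<nu> (tarc q ?x) * (1 - c * a * a) = geo_w W [] ?x / geo_w W' [] ?x - (W ?x ?p * W ?p ?x) * (geo_w W [] ?p / geo_w W' [] ?p)"
    using R geo_nz[OF Wnz, of "[]" ?x] unfolding g by (simp add: field_simps)
  then show ?thesis using geo_ratio[of ?x] geo_ratio[of ?p] prod_WW[of ?p "\<xi> m"] x by simp
qed

lemma nu_off: assumes xv: "p @ [b] \<in> verts q" and off: "p @ [b] \<noteq> pref \<xi> (Suc (length p))"
  shows "\<nu> (tarc q (p @ [b])) * (1 - c * a * a) = c * a * (a' - a) * Q \<xi> p"
proof -
  have R: "\<nu> (tarc q (p @ [b])) * (1 - c * a * a) / geo_w W [] (p @ [b]) =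
     (W' (p @ [b]) p - W (p @ [b]) p) * Kg W' p \<xi>"
    using rec_spec[OF xv] Kg_off[OF off, of W'] by (simp add: algebra_simps)
  have "\<nu> (tarc q (p @ [b])) * (1 - c * a * a) = ((W' (p @ [b]) p - W (p @ [b]) p) * W p (p @ [b])) * Q \<xi> p"
    using R geo_nz[OF Wnz, of "[]" "p @ [b]"] unfolding geo_root_snoc Q_def by (simp add: field_simps)
  then show ?thesis using diff_W by simp
qed

end
end


lemma sq_real_imp_real:
  fixes z :: complex assumes "z\<^sup>2 = of_real v" "v \<ge> 0"
  shows "z = of_real (sqrt v) \<or> z = - of_real (sqrt v)"
proof -
  have e1: "(z - of_real (sqrt v)) * (z + of_real (sqrt v)) = z * z - of_real (sqrt v) * of_real (sqrt v)"
    by algebra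
  have e2: "of_real (sqrt v) * of_real (sqrt v) = (of_real v :: complex)" using assms(2)
    by (metis of_real_mult real_sqrt_mult_self abs_of_nonneg)
  have "(z - of_real (sqrt v)) * (z + of_real (sqrt v)) = z\<^sup>2 - of_real v"
    using e1 e2 by (simp add: power2_eq_square)
  then have "(z - of_real (sqrt v)) * (z + of_real (sqrt v)) = 0" using assms(1) by simp
  then show ?thesis by (auto simp: add_eq_0_iff2)
qed

context
  fixes \<alpha> \<rho> :: real and lam :: complex
  assumes \<alpha>0: "0 < \<alpha>" and \<alpha>1: "\<alpha> < 1" and lamr: "lam \<notin> complex_of_real ` {-\<rho>..\<rho>}"
    and \<rho>: "\<rho> = 2 * sqrt (\<alpha> * (1 - \<alpha>))"
begin

lemma rho_sq: "\<rho>\<^sup>2 = 4 * (\<alpha> * (1 - \<alpha>))" "\<rho> \<ge> 0"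
proof -
  have ab: "\<alpha> * (1 - \<alpha>) \<ge> 0" using \<alpha>0 \<alpha>1 by simp
  show "\<rho>\<^sup>2 = 4 * (\<alpha> * (1 - \<alpha>))" unfolding \<rho> power_mult_distrib using real_sqrt_pow2[OF ab] by simp
  show "\<rho> \<ge> 0" unfolding \<rho> using ab by simp
qed

lemma lam0: "lam \<noteq> 0"
proof
  assume "lam = 0"
  then have "lam = complex_of_real 0" by simp
  moreover have "(0::real) \<in> {-\<rho>..\<rho>}" using rho_sq(2) by simp
  ultimately show False using lamr by blast
qed

definition sw where "sw = csqrt (1 - 4 * of_real (\<alpha> * (1 - \<alpha>)) / lam\<^sup>2)"

lemma Re_sw: "Re sw > 0"
proof (rule ccontr)
  assume "\<not> Re sw > 0"
  then have r0: "Re sw = 0" using Re_csqrt[of "1 - 4 * of_real (\<alpha> * (1 - \<alpha>)) / lam\<^sup>2"] by (simp add: sw_def)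
  define t where "t = Im sw"
  have s: "sw = \<i> * of_real t" using r0 by (simp add: t_def complex_eq_iff)
  have "sw\<^sup>2 = 1 - 4 * of_real (\<alpha> * (1 - \<alpha>)) / lam\<^sup>2" by (simp add: sw_def)
  moreover have "sw\<^sup>2 = - of_real (t\<^sup>2)" by (simp add: s power_mult_distrib)
  ultimately have e: "4 * of_real (\<alpha> * (1 - \<alpha>)) / lam\<^sup>2 = of_real (1 + t\<^sup>2)" by (simp add: algebra_simps)
  define v where "v = 4 * (\<alpha> * (1 - \<alpha>)) / (1 + t\<^sup>2)"
  have pos: "1 + t\<^sup>2 > 0" by (simp add: add_pos_nonneg)
  have e': "4 * of_real (\<alpha> * (1 - \<alpha>)) = lam\<^sup>2 * of_real (1 + t\<^sup>2)"
    using e lam0 by (simp add: field_simps)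
  have pc: "of_real (1 + t\<^sup>2) \<noteq> (0::complex)" using pos of_real_eq_0_iff by (metis less_irrefl)
  have "lam\<^sup>2 = 4 * of_real (\<alpha> * (1 - \<alpha>)) / of_real (1 + t\<^sup>2)"
    using e' pc by (simp add: field_simps)
  then have "lam\<^sup>2 = of_real v" unfolding v_def by simp
  moreover have v0: "v \<ge> 0" using \<alpha>0 \<alpha>1 pos by (simp add: v_def)
  ultimately have "lam = of_real (sqrt v) \<or> lam = - of_real (sqrt v)" by (rule sq_real_imp_real)
  moreover have "sqrt v \<le> \<rho>"
  proof -
    have "v \<le> 4 * (\<alpha> * (1 - \<alpha>))" unfolding v_def using \<alpha>0 \<alpha>1 pos
      by (simp add: divide_le_eq)
    then have "v \<le> \<rho>\<^sup>2" using rho_sq by simp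
    then have "sqrt v \<le> sqrt (\<rho>\<^sup>2)" by (rule real_sqrt_le_mono)
    then show ?thesis using rho_sq(2) by simp
  qed
  moreover have "sqrt v \<ge> 0" using v0 by simp
  ultimately have "lam \<in> complex_of_real ` {-\<rho>..\<rho>}"
  proof (elim disjE)
    assume "lam = of_real (sqrt v)" "sqrt v \<le> \<rho>" "sqrt v \<ge> 0"
    moreover have "- \<rho> \<le> sqrt v" using rho_sq(2) \<open>sqrt v \<ge> 0\<close> by linarith
    ultimately show ?thesis by (intro image_eqI[of _ _ "sqrt v"]) auto
  next
    assume "lam = - of_real (sqrt v)" "sqrt v \<le> \<rho>" "sqrt v \<ge> 0"
    moreover have "- sqrt v \<le> \<rho>" using rho_sq(2) \<open>sqrt v \<ge> 0\<close> by linarith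
    ultimately show ?thesis by (intro image_eqI[of _ _ "- sqrt v"]) auto
  qed
  then show False using lamr by blast
qed

lemma Fm_sw: "Fm \<alpha> lam = lam / (2 * of_real \<alpha>) * (1 - sw)" by (simp add: Fm_def sw_def)
lemma Fmt_sw: "Fmt \<alpha> lam = lam / (2 * of_real \<alpha>) * (1 + sw)" by (simp add: Fmt_def sw_def)

lemma F_prod: "Fm \<alpha> lam * Fmt \<alpha> lam = of_real ((1 - \<alpha>) / \<alpha>)"
proof -
  have h1: "Fm \<alpha> lam * Fmt \<alpha> lam = lam\<^sup>2 / (4 * of_real \<alpha> ^ 2) * (1 - sw\<^sup>2)"
    unfolding Fm_sw Fmt_sw by (simp add: power2_eq_square field_simps)
  have h2: "1 - sw\<^sup>2 = 4 * of_real (\<alpha> * (1 - \<alpha>)) / lam\<^sup>2" by (simp add: sw_def)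
  have "Fm \<alpha> lam * Fmt \<alpha> lam = lam\<^sup>2 / (4 * of_real \<alpha> ^ 2) * (4 * of_real (\<alpha> * (1 - \<alpha>)) / lam\<^sup>2)"
    using h1 h2 by simp
  also have "\<dots> = of_real ((1 - \<alpha>) / \<alpha>)" using lam0 \<alpha>0 by (simp add: field_simps power2_eq_square)
  finally show ?thesis .
qed

lemma Fm_nz: "Fm \<alpha> lam \<noteq> 0" and Fmt_nz: "Fmt \<alpha> lam \<noteq> 0"
  using F_prod \<alpha>0 \<alpha>1 by (auto simp: field_simps)

lemma norm_F_less: "norm (Fm \<alpha> lam) < norm (Fmt \<alpha> lam)"
proof -
  have "(norm (1 - sw))\<^sup>2 < (norm (1 + sw))\<^sup>2"
    using Re_sw by (simp only: cmod_power2) (simp add: power2_eq_square algebra_simps)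
  then have "norm (1 - sw) < norm (1 + sw)" by (rule power_less_imp_less_base) simp
  moreover have "norm (lam / (2 * of_real \<alpha>)) > 0" using lam0 \<alpha>0 by simp
  ultimately show ?thesis unfolding Fm_sw Fmt_sw norm_mult by simp
qed

lemma F_diff_nz: "Fmt \<alpha> lam - Fm \<alpha> lam \<noteq> 0"
  using norm_F_less by auto

end

definition cc :: "nat \<Rightarrow> real \<Rightarrow> complex" where "cc q \<alpha> = of_real (\<alpha> / ((1 - \<alpha>) * real q))"

lemma Fp_cc: "Fp q \<alpha> lam = cc q \<alpha> * Fm \<alpha> lam" by (simp add: Fp_def cc_def)
lemma Fpt_cc: "Fpt q \<alpha> lam = cc q \<alpha> * Fmt \<alpha> lam" by (simp add: Fpt_def cc_def)

lemma cc_prod: assumes "0 < \<alpha>" "\<alpha> < 1" "q \<ge> 1"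
  shows "cc q \<alpha> * of_real ((1 - \<alpha>) / \<alpha>) = 1 / of_nat q"
  using assms by (simp add: cc_def field_simps)


lemma topspace_bdry: "topspace (bdry_top q) = ends q"
proof -
  have "\<Union> (tarc q ` verts q) \<subseteq> ends q" by (auto simp: tarc_def)
  moreover have "ends q \<subseteq> \<Union> (tarc q ` verts q)" using tarc_Nil[of q] verts_Nil[of q] by blast
  ultimately have "\<Union> (tarc q ` verts q) = ends q" by blast
  then show ?thesis by (simp add: bdry_top_def)
qed

lemma open_sub: "{U. openin (bdry_top q) U} \<subseteq> Pow (ends q)"
  using openin_subset topspace_bdry by blast

lemma sets_bdry: "sets (bdry_borel q) = sigma_sets (ends q) {U. openin (bdry_top q) U}"
  unfolding bdry_borel_def topspace_bdry using sets_measure_of[OF open_sub] by simp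

lemma space_bdry: "space (bdry_borel q) = ends q"
  unfolding bdry_borel_def topspace_bdry using space_measure_of[OF open_sub] by simp

lemma open_arc: "x \<in> verts q \<Longrightarrow> openin (bdry_top q) (tarc q x)"
  unfolding bdry_top_def by (rule topology_generated_by_Basis) simp

lemma open_sets: "openin (bdry_top q) U \<Longrightarrow> U \<in> sets (bdry_borel q)"
  unfolding sets_bdry by (rule sigma_sets.Basic) simp

lemma arc_sets: "x \<in> verts q \<Longrightarrow> tarc q x \<in> sets (bdry_borel q)"
  using open_arc open_sets by blast

definition bk :: "nat \<Rightarrow> (nat \<Rightarrow> nat) \<Rightarrow> nat \<Rightarrow> nat" where
  "bk q \<xi> k = (SOME b. b \<le> q \<and> b \<noteq> \<xi> k \<and> (k = 0 \<or> b \<noteq> \<xi> (k - 1)))"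

lemma bk_prop: assumes "q \<ge> 2"
  shows "bk q \<xi> k \<le> q \<and> bk q \<xi> k \<noteq> \<xi> k \<and> (k = 0 \<or> bk q \<xi> k \<noteq> \<xi> (k - 1))"
proof -
  have "\<exists>b. b \<le> q \<and> b \<noteq> \<xi> k \<and> (k = 0 \<or> b \<noteq> \<xi> (k - 1))"
  proof -
    have "\<exists>b::nat. b \<le> 2 \<and> b \<noteq> u \<and> b \<noteq> v" for u v
    proof (cases "u \<noteq> 0 \<and> v \<noteq> 0")
      case True then show ?thesis by (intro exI[of _ 0]) simp
    next
      case F1: False
      show ?thesis
      proof (cases "u \<noteq> 1 \<and> v \<noteq> 1")
        case True then show ?thesis by (intro exI[of _ 1]) simp
      next
        case False then show ?thesis using F1 by (intro exI[of _ 2]) linarith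
      qed
    qed
    then obtain b where "b \<le> 2" "b \<noteq> \<xi> k" "b \<noteq> \<xi> (k - 1)" by blast
    then show ?thesis using assms by (intro exI[of _ b]) auto
  qed
  then show ?thesis unfolding bk_def by (rule someI_ex)
qed

definition bx :: "nat \<Rightarrow> (nat \<Rightarrow> nat) \<Rightarrow> nat \<Rightarrow> nat list" where
  "bx q \<xi> k = pref \<xi> k @ [bk q \<xi> k]"

lemma last_pref: "k > 0 \<Longrightarrow> last (pref \<xi> k) = \<xi> (k - 1)"
  by (cases k) (auto simp: pref_Suc)

lemma bx_verts: "q \<ge> 2 \<Longrightarrow> \<xi> \<in> ends q \<Longrightarrow> bx q \<xi> k \<in> verts q"
  unfolding bx_def verts_snoc using bk_prop[of q \<xi> k] pref_verts[of \<xi> q k] last_pref[of k \<xi>]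
  by (cases k) auto

lemma bx_off: "q \<ge> 2 \<Longrightarrow> bx q \<xi> k \<noteq> pref \<xi> (Suc (length (pref \<xi> k)))"
  unfolding bx_def using bk_prop[of q \<xi> k] by (simp add: pref_Suc)

lemma bx_disj: assumes "j \<noteq> k" "q \<ge> 2" shows "tarc q (bx q \<xi> j) \<inter> tarc q (bx q \<xi> k) = {}"
proof -
  have *: "tarc q (bx q \<xi> j) \<inter> tarc q (bx q \<xi> k) = {}" if "j < k" for j k
  proof (rule tarc_disj')
    show "length (bx q \<xi> j) \<le> length (bx q \<xi> k)" using that by (simp add: bx_def)
    have "take (length (bx q \<xi> j)) (bx q \<xi> k) = pref \<xi> (Suc j)"
      using that by (simp add: bx_def take_pref min_def)
    moreover have "pref \<xi> (Suc j) \<noteq> bx q \<xi> j"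
      using bk_prop[OF assms(2), of \<xi> j] unfolding bx_def pref_Suc by simp
    ultimately show "take (length (bx q \<xi> j)) (bx q \<xi> k) \<noteq> bx q \<xi> j" by simp
  qed
  show ?thesis using assms *[of j k] *[of k j] by (cases "j < k") auto
qed

section \<open>The tilde distribution does not extend\<close>

lemma not_extends_t:
  fixes q :: nat and \<alpha> \<rho> :: real and \<omega> \<xi> :: "nat \<Rightarrow> nat" and lam :: complex
    and \<nu>t :: "(nat \<Rightarrow> nat) set \<Rightarrow> complex"
  assumes q: "q \<ge> 2" and \<alpha>0: "0 < \<alpha>" and \<alpha>1: "\<alpha> < 1"
    and lamr: "lam \<notin> complex_of_real ` {-\<rho>..\<rho>}" and \<rho>: "\<rho> = 2 * sqrt (\<alpha> * (1 - \<alpha>))"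
    and \<xi>: "\<xi> \<in> ends q"
    and d: "distribution q \<nu>t"
    and hyp: "\<forall>x\<in>verts q. Kker q \<alpha> \<omega> lam x \<xi> = dist_integral q \<nu>t (Kkert q \<alpha> \<omega> lam x)"
  shows "\<not> extends_to_borel q \<nu>t"
proof
  assume ext: "extends_to_borel q \<nu>t"
  have q1: "q \<ge> 1" using q by simp
  interpret wp: wpair q \<omega> "cc q \<alpha>" "Fmt \<alpha> lam" "Fm \<alpha> lam"
  proof
    show "q \<ge> 1" by (rule q1)
    show "Fmt \<alpha> lam \<noteq> 0" using Fmt_nz[OF \<alpha>0 \<alpha>1 lamr \<rho>] .
    show "Fm \<alpha> lam \<noteq> 0" using Fm_nz[OF \<alpha>0 \<alpha>1 lamr \<rho>] .
    show "cc q \<alpha> * Fmt \<alpha> lam * Fm \<alpha> lam = 1 / of_nat q"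
      using F_prod[OF \<alpha>0 \<alpha>1 lamr \<rho>] cc_prod[OF \<alpha>0 \<alpha>1 q1] by (simp add: mult.assoc mult.commute[of "Fmt \<alpha> lam"])
  qed
  have hyp': "\<forall>z\<in>verts q. Kg wp.W' z \<xi> = dist_integral q \<nu>t (Kg wp.W z)"
    using hyp unfolding Kker_Kg Kkert_Kg wp.W_def wp.W'_def Fp_cc Fpt_cc .
  define a where "a = Fmt \<alpha> lam"
  define a' where "a' = Fm \<alpha> lam"
  define c where "c = cc q \<alpha>"
  define D where "D = c * a * (a' - a)"
  have D0: "D \<noteq> 0" unfolding D_def c_def a_def a'_def
    using wp.c0 Fmt_nz[OF \<alpha>0 \<alpha>1 lamr \<rho>] F_diff_nz[OF \<alpha>0 \<alpha>1 lamr \<rho>] by auto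
  have rge: "norm wp.r \<ge> 1" unfolding wp.r_def
    using norm_F_less[OF \<alpha>0 \<alpha>1 lamr \<rho>] Fm_nz[OF \<alpha>0 \<alpha>1 lamr \<rho>] by (simp add: norm_divide)
  have eq: "\<nu>t (tarc q (bx q \<xi> k)) * (1 - c * a * a) = D * wp.r ^ k" for k
  proof -
    have "\<nu>t (tarc q (pref \<xi> k @ [bk q \<xi> k])) * (1 - c * a * a) = D * wp.Q \<xi> (pref \<xi> k)"
      using wp.nu_off[OF d hyp', of "pref \<xi> k" "bk q \<xi> k"] bx_verts[OF q \<xi>, of k] bx_off[OF q, of \<xi> k]
      unfolding bx_def D_def a_def a'_def c_def by simp
    then show ?thesis using wp.Q_on by (simp add: bx_def)
  qed
  have pi1: "1 - c * a * a \<noteq> 0"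
  proof
    assume "1 - c * a * a = 0"
    then have "D * wp.r ^ 0 = 0" using eq[of 0] by simp
    then show False using D0 by simp
  qed
  define \<delta> where "\<delta> = norm D / norm (1 - c * a * a)"
  have \<delta>0: "\<delta> > 0" using D0 pi1 by (simp add: \<delta>_def)
  have lower: "norm (\<nu>t (tarc q (bx q \<xi> k))) \<ge> \<delta>" for k
  proof -
    have "\<nu>t (tarc q (bx q \<xi> k)) = D * wp.r ^ k / (1 - c * a * a)" using eq[of k] pi1 by (simp add: field_simps)
    then have "norm (\<nu>t (tarc q (bx q \<xi> k))) = norm D * norm wp.r ^ k / norm (1 - c * a * a)"
      by (simp add: norm_mult norm_divide norm_power)
    moreover have "norm wp.r ^ k \<ge> 1" using rge by (simp add: one_le_power)
    ultimately show ?thesis unfolding \<delta>_def using pi1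
      by (simp add: divide_right_mono mult_le_cancel_left1)
  qed
  obtain \<mu> where cm: "complex_measure_on (bdry_borel q) \<mu>" and agree: "\<forall>A\<in>bdry_alg q. \<mu> A = \<nu>t A"
    using ext unfolding extends_to_borel_def by blast
  define A where "A k = tarc q (bx q \<xi> k)" for k
  have rA: "range A \<subseteq> sets (bdry_borel q)" using arc_sets bx_verts[OF q \<xi>] by (auto simp: A_def)
  have dA: "disjoint_family A" unfolding disjoint_family_on_def A_def using bx_disj[OF _ q] by blast
  have "(\<lambda>k. \<mu> (A k)) sums \<mu> (\<Union>k. A k)" using cm rA dA unfolding complex_measure_on_def by blast
  then have "(\<lambda>k. \<mu> (A k)) \<longlonglongrightarrow> 0" using summable_LIMSEQ_zero sums_summable by blast
  moreover have "\<mu> (A k) = \<nu>t (A k)" for k using agree arc_alg bx_verts[OF q \<xi>] by (simp add: A_def)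
  ultimately have "(\<lambda>k. \<nu>t (A k)) \<longlonglongrightarrow> 0" by simp
  then have "eventually (\<lambda>k. norm (\<nu>t (A k)) < \<delta>) sequentially"
    using \<delta>0 by (simp add: tendsto_iff dist_norm)
  then obtain k where "norm (\<nu>t (A k)) < \<delta>" using eventually_sequentially by auto
  then show False using lower[of k] by (simp add: A_def)
qed


lemma open_arcs:
  assumes "openin (bdry_top q) U" "\<eta> \<in> U"
  shows "\<exists>y\<in>verts q. \<eta> \<in> tarc q y \<and> tarc q y \<subseteq> U"
proof -
  have "generate_topology_on (tarc q ` verts q) U"
    using assms(1) unfolding bdry_top_def by (rule openin_topology_generated_by)
  then show ?thesis using assms(2)
  proof (induction arbitrary: \<eta> rule: generate_topology_on.induct)
    case Empty then show ?case by simp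
  next
    case (Int a b)
    obtain y1 where y1: "y1 \<in> verts q" "\<eta> \<in> tarc q y1" "tarc q y1 \<subseteq> a" using Int by blast
    obtain y2 where y2: "y2 \<in> verts q" "\<eta> \<in> tarc q y2" "tarc q y2 \<subseteq> b" using Int by blast
    have p1: "pref \<eta> (length y1) = y1" and p2: "pref \<eta> (length y2) = y2" using y1 y2 by (auto simp: tarc_iff)
    show ?case
    proof (cases "length y1 \<le> length y2")
      case True
      then have "take (length y1) y2 = y1" using p1 p2 by (metis take_pref min_def)
      then have "tarc q y2 \<subseteq> tarc q y1" using True tarc_mono by blast
      then show ?thesis using y1 y2 by blast
    next
      case False
      then have "take (length y2) y1 = y2" using p1 p2 by (metis take_pref min_def nat_le_linear)
      then have "tarc q y1 \<subseteq> tarc q y2" using False tarc_mono by (metis nat_le_linear)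
      then show ?thesis using y1 y2 by blast
    qed
  next
    case (UN K)
    then obtain k where "k \<in> K" "\<eta> \<in> k" by blast
    then show ?case using UN by blast
  next
    case (Basis s)
    then show ?case by blast
  qed
qed

lemma open_Union_arcs:
  assumes "openin (bdry_top q) U"
  shows "U = (\<Union>y\<in>{y \<in> verts q. tarc q y \<subseteq> U}. tarc q y)"
  using open_arcs[OF assms] by blast

section \<open>The uniform measure on the ends\<close>

definition mm :: "nat \<Rightarrow> nat \<Rightarrow> nat" where "mm q n = (if n = 0 then Suc q else q)"

definition Om :: "nat \<Rightarrow> (nat \<Rightarrow> nat) measure" where
  "Om q = PiM UNIV (\<lambda>n. uniform_count_measure {..<mm q n})"

primrec phi :: "(nat \<Rightarrow> nat) \<Rightarrow> nat \<Rightarrow> nat" where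
  "phi c 0 = c 0"
| "phi c (Suc n) = (if c (Suc n) < phi c n then c (Suc n) else Suc (c (Suc n)))"

definition ee :: "nat list \<Rightarrow> nat \<Rightarrow> nat" where
  "ee y i = (if i = 0 then y ! 0 else if y ! i < y ! (i - 1) then y ! i else y ! i - 1)"

lemma space_Om: "space (Om q) = PiE UNIV (\<lambda>n. {..<mm q n})"
  by (simp add: Om_def space_PiM space_uniform_count_measure)

lemma prob_Om: "q \<ge> 1 \<Longrightarrow> prob_space (Om q)"
  unfolding Om_def by (rule prob_space_PiM, rule prob_space_uniform_count_measure) (auto simp: mm_def lessThan_empty_iff)

lemma phi_ends: assumes q: "q \<ge> 1" and c: "c \<in> space (Om q)" shows "phi c \<in> ends q"
proof -
  have cb: "c n < mm q n" for n using c by (auto simp: space_Om)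
  have le: "phi c n \<le> q" for n
  proof (cases n)
    case 0 then show ?thesis using cb[of 0] by (simp add: mm_def)
  next
    case (Suc m) then show ?thesis using cb[of n] by (auto simp: mm_def)
  qed
  have "phi c (Suc n) \<noteq> phi c n" for n by auto
  then show ?thesis using le by (simp add: ends_def)
qed

lemma gh: "(v::nat) \<noteq> l \<Longrightarrow> ((if c < l then c else Suc c) = v) \<longleftrightarrow> c = (if v < l then v else v - 1)"
  by auto

lemma phi_cyl:
  assumes y: "y \<in> verts q" and n: "n \<le> length y"
  shows "(\<forall>i<n. phi c i = y ! i) \<longleftrightarrow> (\<forall>i<n. c i = ee y i)"
  using n
proof (induction n)
  case 0 then show ?case by simp
next
  case (Suc n)
  have IH: "(\<forall>i<n. phi c i = y ! i) \<longleftrightarrow> (\<forall>i<n. c i = ee y i)" using Suc by simp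
  show ?case
  proof (cases n)
    case 0 then show ?thesis by (simp add: ee_def)
  next
    case (Suc k)
    have neq: "y ! n \<noteq> y ! k" using y \<open>Suc n \<le> length y\<close> Suc unfolding verts_def by auto
    show ?thesis
    proof
      assume a: "\<forall>i<Suc n. phi c i = y ! i"
      then have b: "\<forall>i<n. c i = ee y i" using IH by auto
      have "phi c n = y ! n" using a lessI by blast
      moreover have "phi c k = y ! k" using a Suc by (metis less_SucI lessI)
      moreover have "phi c n = (if c n < phi c k then c n else Suc (c n))" using Suc by simp
      ultimately have "(if c n < y ! k then c n else Suc (c n)) = y ! n" by simp
      then have "c n = (if y ! n < y ! k then y ! n else y ! n - 1)" using gh[OF neq] by blast
      then have "c n = ee y n" using Suc by (simp add: ee_def)
      then show "\<forall>i<Suc n. c i = ee y i" using b less_Suc_eq by auto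
    next
      assume a: "\<forall>i<Suc n. c i = ee y i"
      then have b: "\<forall>i<n. phi c i = y ! i" using IH by auto
      have "phi c k = y ! k" "c n = ee y n" using a b Suc by auto
      then have "c n = (if y ! n < y ! k then y ! n else y ! n - 1)" using Suc by (simp add: ee_def)
      then have "(if c n < y ! k then c n else Suc (c n)) = y ! n" using gh[OF neq] by blast
      moreover have "phi c n = (if c n < phi c k then c n else Suc (c n))" using Suc by simp
      ultimately have "phi c n = y ! n" using \<open>phi c k = y ! k\<close> by simp
      then show "\<forall>i<Suc n. phi c i = y ! i" using b less_Suc_eq by auto
    qed
  qed
qed

lemma ee_range: assumes y: "y \<in> verts q" and i: "i < length y" shows "ee y i < mm q i"
proof (cases i)
  case 0 then show ?thesis using y i by (auto simp: ee_def mm_def verts_def)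
next
  case (Suc k)
  have "y ! i \<le> q" "y ! k \<le> q" "y ! i \<noteq> y ! k" using y i Suc by (auto simp: verts_def)
  then show ?thesis using Suc by (auto simp: ee_def mm_def)
qed

lemma phi_preimage:
  assumes q: "q \<ge> 1" and y: "y \<in> verts q"
  shows "phi -` tarc q y \<inter> space (Om q) =
     prod_emb UNIV (\<lambda>n. uniform_count_measure {..<mm q n}) {..<length y} (PiE {..<length y} (\<lambda>i. {ee y i}))"
proof -
  have "c \<in> phi -` tarc q y \<longleftrightarrow> (\<forall>i<length y. c i = ee y i)" if c: "c \<in> space (Om q)" for c
  proof -
    have "c \<in> phi -` tarc q y \<longleftrightarrow> pref (phi c) (length y) = y"
      using phi_ends[OF q c] by (simp add: tarc_iff)
    also have "\<dots> \<longleftrightarrow> (\<forall>i<length y. phi c i = y ! i)"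
      by (auto simp: list_eq_iff_nth_eq nth_pref)
    also have "\<dots> \<longleftrightarrow> (\<forall>i<length y. c i = ee y i)" using phi_cyl[OF y order_refl] .
    finally show ?thesis .
  qed
  then show ?thesis
  proof (intro set_eqI iffI)
    fix c assume h: "\<And>c. c \<in> space (Om q) \<Longrightarrow> (c \<in> phi -` tarc q y) = (\<forall>i<length y. c i = ee y i)"
      and c: "c \<in> phi -` tarc q y \<inter> space (Om q)"
    then show "c \<in> prod_emb UNIV (\<lambda>n. uniform_count_measure {..<mm q n}) {..<length y} (PiE {..<length y} (\<lambda>i. {ee y i}))"
      unfolding prod_emb_iff restrict_PiE_iff using c by (auto simp: space_Om space_uniform_count_measure)
  next
    fix c assume h: "\<And>c. c \<in> space (Om q) \<Longrightarrow> (c \<in> phi -` tarc q y) = (\<forall>i<length y. c i = ee y i)"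
      and c: "c \<in> prod_emb UNIV (\<lambda>n. uniform_count_measure {..<mm q n}) {..<length y} (PiE {..<length y} (\<lambda>i. {ee y i}))"
    have cs: "c \<in> space (Om q)" using c unfolding prod_emb_iff by (auto simp: space_Om space_uniform_count_measure)
    moreover have "\<forall>i<length y. c i = ee y i" using c unfolding prod_emb_iff restrict_PiE_iff by auto
    ultimately show "c \<in> phi -` tarc q y \<inter> space (Om q)" using h by blast
  qed
qed

lemma phi_meas: assumes q: "q \<ge> 1" shows "phi \<in> measurable (Om q) (bdry_borel q)"
  unfolding bdry_borel_def topspace_bdry
proof (rule measurable_measure_of)
  show "{U. openin (bdry_top q) U} \<subseteq> Pow (ends q)" by (rule open_sub)
  show "phi \<in> space (Om q) \<rightarrow> ends q" using phi_ends[OF q] by blast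
  fix U assume "U \<in> {U. openin (bdry_top q) U}"
  then have U: "U = (\<Union>y\<in>{y \<in> verts q. tarc q y \<subseteq> U}. tarc q y)"
    using open_Union_arcs by blast
  have "phi -` U \<inter> space (Om q) = (\<Union>y\<in>{y \<in> verts q. tarc q y \<subseteq> U}. phi -` tarc q y \<inter> space (Om q))"
    by (subst U) auto
  also have "\<dots> \<in> sets (Om q)"
  proof (rule sets.countable_UN'')
    show "countable {y \<in> verts q. tarc q y \<subseteq> U}" by (rule countableI_type)
    fix y assume "y \<in> {y \<in> verts q. tarc q y \<subseteq> U}"
    then have yv: "y \<in> verts q" by simp
    show "phi -` tarc q y \<inter> space (Om q) \<in> sets (Om q)"
      apply (subst phi_preimage[OF q yv])
      unfolding Om_def
      by (intro sets_PiM_I) (auto simp: sets_uniform_count_measure ee_range[OF yv])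
  qed
  finally show "phi -` U \<inter> space (Om q) \<in> sets (Om q)" .
qed

definition UU :: "nat \<Rightarrow> (nat \<Rightarrow> nat) measure" where
  "UU q = distr (Om q) (bdry_borel q) phi"

lemma prob_UU: "q \<ge> 1 \<Longrightarrow> prob_space (UU q)"
  unfolding UU_def by (rule prob_space.prob_space_distr[OF prob_Om phi_meas])

lemma sets_UU[simp]: "sets (UU q) = sets (bdry_borel q)" by (simp add: UU_def)
lemma space_UU: "space (UU q) = ends q" by (simp add: UU_def space_bdry)

definition wt :: "nat \<Rightarrow> nat \<Rightarrow> real" where
  "wt q n = (\<Prod>i<n. 1 / real (mm q i))"

lemma UU_arc: assumes q: "q \<ge> 1" and y: "y \<in> verts q"
  shows "measure (UU q) (tarc q y) = wt q (length y)"
proof -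
  have "emeasure (UU q) (tarc q y) = emeasure (Om q) (phi -` tarc q y \<inter> space (Om q))"
    unfolding UU_def by (rule emeasure_distr[OF phi_meas[OF q] arc_sets[OF y]])
  also have "\<dots> = (\<Prod>i\<in>{..<length y}. emeasure (uniform_count_measure {..<mm q i}) {ee y i})"
    apply (subst phi_preimage[OF q y])
    unfolding Om_def
  proof (rule emeasure_PiM_emb)
    show "prob_space (uniform_count_measure {..<mm q i})" for i
      using q by (intro prob_space_uniform_count_measure) (auto simp: mm_def lessThan_empty_iff)
    show "{ee y i} \<in> sets (uniform_count_measure {..<mm q i})" if "i \<in> {..<length y}" for i
      using ee_range[OF y, of i] that by (auto simp: sets_uniform_count_measure)
  qed auto
  also have "\<dots> = (\<Prod>i\<in>{..<length y}. ennreal (1 / real (mm q i)))"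
    by (intro prod.cong refl, subst emeasure_uniform_count_measure) (auto simp: ee_range[OF y] ennreal_of_nat_eq_real_of_nat divide_ennreal)
  also have "\<dots> = ennreal (wt q (length y))" unfolding wt_def by (simp add: prod_ennreal)
  moreover have "wt q (length y) \<ge> 0" unfolding wt_def by (simp add: prod_nonneg)
  ultimately show ?thesis unfolding measure_def by simp
qed

lemma wt_Suc: "wt q (Suc n) = wt q n / real (mm q n)" by (simp add: wt_def)


lemma cm_series:
  fixes U :: "'a measure" and R :: "nat \<Rightarrow> 'a set" and \<beta> :: "nat \<Rightarrow> complex" and Mb :: "nat \<Rightarrow> real"
  assumes fm: "finite_measure U" and R: "\<And>k. R k \<in> sets U"
    and bound: "\<And>k. norm (\<beta> k) * measure U (R k) \<le> Mb k" and sM: "summable Mb"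
  shows "complex_measure_on U (\<lambda>A. \<Sum>k. \<beta> k * of_real (measure U (A \<inter> R k)))"
proof -
  interpret finite_measure U by (rule fm)
  define f where "f A k = \<beta> k * of_real (measure U (A \<inter> R k))" for A k
  have bnd: "norm (f A k) \<le> Mb k" if A: "A \<in> sets U" for A k
  proof -
    have "measure U (A \<inter> R k) \<le> measure U (R k)" using A R by (intro finite_measure_mono) auto
    then have "norm (\<beta> k) * measure U (A \<inter> R k) \<le> norm (\<beta> k) * measure U (R k)"
      by (simp add: mult_left_mono)
    then show ?thesis using bound[of k] by (simp add: f_def norm_mult)
  qed
  have sumf: "summable (f A)" if "A \<in> sets U" for A
    by (rule summable_comparison_test'[OF sM]) (use bnd that in blast)
  show ?thesis unfolding complex_measure_on_def
  proof (intro conjI allI impI)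
    show "(\<Sum>k. \<beta> k * of_real (measure U ({} \<inter> R k))) = 0" by simp
    fix A :: "nat \<Rightarrow> 'a set" assume rA: "range A \<subseteq> sets U" and dA: "disjoint_family A"
    define S where "S = (\<Union>n. A n)"
    define B where "B N = (\<Union>n<N. A n)" for N
    have AS: "A n \<in> sets U" for n using rA by auto
    have BS: "B N \<in> sets U" for N unfolding B_def using AS by auto
    have SS: "S \<in> sets U" unfolding S_def using AS by auto
    have part: "(\<Sum>n<N. suminf (f (A n))) = suminf (f (B N))" for N
    proof -
      have "(\<Sum>n<N. suminf (f (A n))) = (\<Sum>k. \<Sum>n<N. f (A n) k)"
        using suminf_sum[of "{..<N}" "\<lambda>n. f (A n)"] sumf AS by simp
      also have "\<dots> = suminf (f (B N))"
      proof (rule arg_cong[where f=suminf], rule ext)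
        fix k
        have "measure U (B N \<inter> R k) = measure U (\<Union>n\<in>{..<N}. A n \<inter> R k)"
          unfolding B_def by (simp add: Int_UN_distrib2)
        also have "\<dots> = (\<Sum>n<N. measure U (A n \<inter> R k))"
        proof (rule measure_finite_Union)
          show "disjoint_family_on (\<lambda>n. A n \<inter> R k) {..<N}"
            using dA unfolding disjoint_family_on_def by auto
        qed (use AS R in \<open>auto simp: emeasure_eq_measure\<close>)
        finally show "(\<Sum>n<N. f (A n) k) = f (B N) k"
          by (simp add: f_def sum_distrib_left)
      qed
      finally show ?thesis .
    qed
    have lim: "(\<lambda>N. suminf (f (B N))) \<longlonglongrightarrow> suminf (f S)"
    proof -
      have l: "(\<lambda>N. f (B N) k) \<longlonglongrightarrow> f S k" for k
      proof -
        have "(\<lambda>N. measure U (B N \<inter> R k)) \<longlonglongrightarrow> measure U (\<Union>N. B N \<inter> R k)"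
        proof (rule finite_Lim_measure_incseq)
          show "range (\<lambda>N. B N \<inter> R k) \<subseteq> sets U" using BS R by auto
          show "incseq (\<lambda>N. B N \<inter> R k)" unfolding B_def incseq_def
            by (auto, meson lessThan_iff less_le_trans)
        qed
        moreover have "(\<Union>N. B N \<inter> R k) = S \<inter> R k" unfolding B_def S_def by auto
        ultimately have "(\<lambda>N. measure U (B N \<inter> R k)) \<longlonglongrightarrow> measure U (S \<inter> R k)" by simp
        then show ?thesis unfolding f_def by (intro tendsto_mult tendsto_const tendsto_of_real)
      qed
      have "eventually (\<lambda>(k, N). norm (f (B N) k) \<le> Mb k) (at_top \<times>\<^sub>F sequentially)"
        using bnd BS by (intro always_eventually) auto
      from tannerys_theorem[OF l this sM] show ?thesis by simp
    qed
    show "(\<lambda>n. \<Sum>k. \<beta> k * of_real (measure U (A n \<inter> R k))) sums (\<Sum>k. \<beta> k * of_real (measure U ((\<Union>n. A n) \<inter> R k)))"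
      unfolding sums_def using lim part unfolding f_def S_def by simp
  qed
qed

lemma real_series_measure:
  fixes U :: "'a measure" and R :: "nat \<Rightarrow> 'a set" and \<beta> :: "nat \<Rightarrow> real" and Mb :: "nat \<Rightarrow> real"
  assumes pU: "prob_space U" and R: "\<And>k. R k \<in> sets U" and pos: "\<And>k. \<beta> k \<ge> 0"
    and bound: "\<And>k. \<beta> k * measure U (R k) \<le> Mb k" and sM: "summable Mb"
    and tot: "(\<Sum>k. \<beta> k * measure U (space U \<inter> R k)) = 1"
  shows "\<exists>M. prob_space M \<and> space M = space U \<and> sets M = sets U \<and>
     (\<forall>A\<in>sets U. measure M A = (\<Sum>k. \<beta> k * measure U (A \<inter> R k)))"
proof -
  interpret prob_space U by (rule pU)
  define g where "g x = (\<Sum>k. ennreal (\<beta> k) * indicator (R k) x)" for x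
  have gm: "g \<in> borel_measurable U" unfolding g_def using R by measurable
  define M where "M = density U g"
  have sumA: "summable (\<lambda>k. \<beta> k * measure U (A \<inter> R k))" if "A \<in> sets U" for A
  proof (rule summable_comparison_test'[OF sM])
    fix k
    have "measure U (A \<inter> R k) \<le> measure U (R k)" using that R by (intro finite_measure_mono) auto
    then have "\<beta> k * measure U (A \<inter> R k) \<le> \<beta> k * measure U (R k)" using pos by (simp add: mult_left_mono)
    then show "norm (\<beta> k * measure U (A \<inter> R k)) \<le> Mb k" using bound[of k] pos[of k] by simp
  qed
  have em: "emeasure M A = ennreal (\<Sum>k. \<beta> k * measure U (A \<inter> R k))" if A: "A \<in> sets U" for A
  proof -
    have "emeasure M A = (\<integral>\<^sup>+ x. g x * indicator A x \<partial>U)"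
      unfolding M_def by (rule emeasure_density[OF gm A])
    also have "\<dots> = (\<integral>\<^sup>+ x. (\<Sum>k. ennreal (\<beta> k) * indicator (A \<inter> R k) x) \<partial>U)"
      unfolding g_def ennreal_suminf_multc[symmetric]
      by (intro nn_integral_cong) (simp add: indicator_inter_arith mult.assoc mult.commute[of "indicator A _"])
    also have "\<dots> = (\<Sum>k. \<integral>\<^sup>+ x. ennreal (\<beta> k) * indicator (A \<inter> R k) x \<partial>U)"
      by (rule nn_integral_suminf) (use A R in measurable)
    also have "\<dots> = (\<Sum>k. ennreal (\<beta> k * measure U (A \<inter> R k)))"
      using A R by (subst nn_integral_cmult_indicator) (auto simp: emeasure_eq_measure ennreal_mult pos)
    also have "\<dots> = ennreal (\<Sum>k. \<beta> k * measure U (A \<inter> R k))"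
      by (rule suminf_ennreal2) (use pos sumA[OF A] in auto)
    finally show ?thesis .
  qed
  have sM': "sets M = sets U" "space M = space U" unfolding M_def by auto
  have "prob_space M"
  proof
    show "emeasure M (space M) = 1" using em[of "space U"] tot sM' by simp
  qed
  moreover have "measure M A = (\<Sum>k. \<beta> k * measure U (A \<inter> R k))" if "A \<in> sets U" for A
  proof -
    have "(\<Sum>k. \<beta> k * measure U (A \<inter> R k)) \<ge> 0"
      using pos by (intro suminf_nonneg sumA that) auto
    then show ?thesis using em[OF that] unfolding measure_def by simp
  qed
  ultimately show ?thesis using sM' by blast
qed


lemma cm_fin_add:
  assumes cm: "complex_measure_on M \<mu>" and A: "A \<in> sets M" and B: "B \<in> sets M" and dj: "A \<inter> B = {}"
  shows "\<mu> (A \<union> B) = \<mu> A + \<mu> B"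
proof -
  define X where "X n = (if n = 0 then A else if n = 1 then B else {})" for n :: nat
  have rX: "range X \<subseteq> sets M" using A B by (auto simp: X_def)
  have dX: "disjoint_family X" using dj unfolding disjoint_family_on_def X_def by auto
  have "(\<lambda>n. \<mu> (X n)) sums \<mu> (\<Union>n. X n)" using cm rX dX unfolding complex_measure_on_def by blast
  moreover have "(\<Union>n. X n) = A \<union> B" by (auto simp: X_def split: if_splits)
  moreover have "(\<lambda>n. \<mu> (X n)) sums (\<Sum>n\<in>{0,1}. \<mu> (X n))"
    by (rule sums_finite) (use cm in \<open>auto simp: X_def complex_measure_on_def\<close>)
  ultimately show ?thesis by (simp add: X_def sums_unique2)
qed

lemma union_arcs_sets: "finite S \<Longrightarrow> S \<subseteq> verts q \<Longrightarrow> (\<Union>c\<in>S. tarc q c) \<in> sets (bdry_borel q)"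
  using arc_sets by (intro sets.finite_UN) auto

lemma basic_sets_sets: "B \<in> basic_sets q \<Longrightarrow> B \<in> sets (bdry_borel q)"
  unfolding basic_sets_def using arc_sets union_arcs_sets children_verts
  by (auto intro!: sets.Diff) (metis (no_types, lifting) children_verts subset_iff union_arcs_sets)

lemma basic_alg: "B \<in> basic_sets q \<Longrightarrow> B \<in> bdry_alg q"
  unfolding bdry_alg_def by (rule CollectI, rule exI[of _ "{B}"]) (auto simp: disjoint_def)

lemma alg_agree:
  assumes q: "q \<ge> 1" and d: "distribution q \<nu>" and e0: "\<mu> {} = 0"
    and add: "\<And>A B. A \<in> sets (bdry_borel q) \<Longrightarrow> B \<in> sets (bdry_borel q) \<Longrightarrow> A \<inter> B = {} \<Longrightarrow> \<mu> (A \<union> B) = \<mu> A + \<mu> B"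
    and arcs: "\<And>y. y \<in> verts q \<Longrightarrow> \<mu> (tarc q y) = \<nu> (tarc q y)"
  shows "\<forall>A\<in>bdry_alg q. \<mu> A = \<nu> A"
proof -
  have children_sum: "\<mu> (\<Union>c\<in>S. tarc q c) = (\<Sum>c\<in>S. \<mu> (tarc q c))" if x: "x \<in> verts q" and S: "S \<subseteq> children q x" for x S
  proof -
    have "finite S" using S finite_children finite_subset by blast
    then show ?thesis using S
    proof (induction S rule: finite_induct)
      case empty then show ?case using e0 by simp
    next
      case (insert a S)
      have dj: "tarc q a \<inter> (\<Union>c\<in>S. tarc q c) = {}"
        using insert tarc_disj[of a _ q] children_len by (auto, metis IntI empty_iff subsetD)
      have a1: "tarc q a \<in> sets (bdry_borel q)" using insert children_verts arc_sets by blast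
      have a2: "(\<Union>c\<in>S. tarc q c) \<in> sets (bdry_borel q)"
        using insert children_verts by (intro union_arcs_sets) auto
      have "\<mu> (tarc q a \<union> (\<Union>c\<in>S. tarc q c)) = \<mu> (tarc q a) + \<mu> (\<Union>c\<in>S. tarc q c)"
        using add[OF a1 a2 dj] .
      then have "\<mu> (\<Union>c\<in>insert a S. tarc q c) = \<mu> (tarc q a) + \<mu> (\<Union>c\<in>S. tarc q c)" by simp
      then show ?case using insert by simp
    qed
  qed
  have basic: "\<mu> B = \<nu> B" if B: "B \<in> basic_sets q" for B
  proof -
    obtain x S where xS: "B = tarc q x - (\<Union>c\<in>S. tarc q c)" "x \<in> verts q" "finite S" "S \<subseteq> children q x"
      using B unfolding basic_sets_def by blast
    define C where "C = (\<Union>c\<in>S. tarc q c)"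
    have Csub: "C \<subseteq> tarc q x" unfolding C_def using xS(4) tarc_children[OF xS(2)] by blast
    have e: "tarc q x = B \<union> C" and dj: "B \<inter> C = {}" using Csub xS(1) C_def by auto
    have Cs: "C \<in> sets (bdry_borel q)" unfolding C_def using xS children_verts by (intro union_arcs_sets) auto
    have Ca: "C \<in> bdry_alg q" unfolding C_def using arc_union_alg xS by blast
    have "\<mu> (tarc q x) = \<mu> B + \<mu> C" using add[OF basic_sets_sets[OF B] Cs dj] e by simp
    moreover have "\<nu> (tarc q x) = \<nu> B + \<nu> C" using d basic_alg[OF B] Ca dj e unfolding distribution_def by metis
    moreover have "\<mu> C = \<nu> C" unfolding C_def
    proof -
      have "(\<Sum>c\<in>S. \<mu> (tarc q c)) = (\<Sum>c\<in>S. \<nu> (tarc q c))"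
        using arcs children_verts xS(4) by (intro sum.cong) auto
      then show "\<mu> (\<Union>c\<in>S. tarc q c) = \<nu> (\<Union>c\<in>S. tarc q c)"
        using children_sum[OF xS(2,4)] dist_children_sum[OF d xS(2,4)] by simp
    qed
    ultimately show ?thesis using arcs[OF xS(2)] by simp
  qed
  show ?thesis
  proof
    fix A assume "A \<in> bdry_alg q"
    then obtain F where F: "A = \<Union>F" "finite F" "F \<subseteq> basic_sets q" "disjoint F" unfolding bdry_alg_def by blast
    have "\<mu> (\<Union>F) = \<nu> (\<Union>F)" using F(2-4)
    proof (induction F rule: finite_induct)
      case empty then show ?case using e0 dist_empty[OF d] by simp
    next
      case (insert B F)
      have dF: "disjoint F" using insert(5) unfolding disjoint_def by blast
      have dj: "B \<inter> \<Union>F = {}" using insert(2,5) unfolding disjoint_def by (auto simp: disjnt_def) 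
      have BF: "\<Union>F \<in> bdry_alg q" unfolding bdry_alg_def using insert dF by blast
      have BFs: "\<Union>F \<in> sets (bdry_borel q)" using insert basic_sets_sets by (intro sets.finite_Union) auto
      have "\<mu> (\<Union>(insert B F)) = \<mu> B + \<mu> (\<Union>F)"
        using add[OF basic_sets_sets BFs dj] insert by simp
      moreover have "\<nu> (\<Union>(insert B F)) = \<nu> B + \<nu> (\<Union>F)"
        using d basic_alg BF dj insert unfolding distribution_def by simp
      ultimately show ?case using basic insert dF by simp
    qed
    then show "\<mu> A = \<nu> A" using F by simp
  qed
qed


lemma wt_0[simp]: "wt q 0 = 1" by (simp add: wt_def)

lemma wt_closed: "q \<ge> 1 \<Longrightarrow> wt q (Suc k) * (real q + 1) * real q ^ k = 1"
proof (induction k)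
  case 0 then show ?case by (simp add: wt_def mm_def)
next
  case (Suc k)
  have w: "wt q (Suc (Suc k)) = wt q (Suc k) / real q" by (simp add: wt_Suc mm_def)
  have "wt q (Suc (Suc k)) * (real q + 1) * real q ^ Suc k = (wt q (Suc k) / real q) * (real q + 1) * (real q * real q ^ k)"
    unfolding w by simp
  also have "\<dots> = wt q (Suc k) * (real q + 1) * real q ^ k" using Suc.prems by (simp add: field_simps)
  finally show ?case using Suc by simp
qed

lemma wt_nonneg: "wt q k \<ge> 0" unfolding wt_def by (simp add: prod_nonneg)

lemma wt_bound: "q \<ge> 1 \<Longrightarrow> real q ^ k * (real q + 1) * wt q k \<le> real q + 1"
proof (cases k)
  case 0 then show ?thesis by simp
next
  case (Suc m)
  assume q: "q \<ge> 1"
  have "real q ^ k * (real q + 1) * wt q k = real q * (wt q (Suc m) * (real q + 1) * real q ^ m)"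
    using Suc by (simp add: algebra_simps)
  also have "\<dots> = real q" using wt_closed[OF q] by simp
  finally show ?thesis by simp
qed

lemma geo_tail:
  fixes r C :: complex assumes r: "norm r < 1"
  shows "(\<lambda>k. if n \<le> k then C * r ^ k else 0) sums (C * r ^ n / (1 - r))"
proof -
  have "(\<lambda>i. (C * r ^ n) * r ^ i) sums ((C * r ^ n) * (1 / (1 - r)))"
    by (rule sums_mult[OF geometric_sums[OF r]])
  then have "(\<lambda>i. (\<lambda>k. if n \<le> k then C * r ^ k else 0) (i + n)) sums (C * r ^ n / (1 - r))"
    by (simp add: power_add algebra_simps)
  then show ?thesis by (subst (asm) sums_iff_shift) simp
qed

lemma pref_mono: "n \<le> m \<Longrightarrow> tarc q (pref \<xi> m) \<subseteq> tarc q (pref \<xi> n)"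
  by (rule tarc_mono) (simp_all add: take_pref min_def)

lemma alg1: fixes r Q :: complex assumes "Q - r \<noteq> 0" "1 - r \<noteq> 0"
  shows "(1 - r)/(Q - r) * (Q - 1) * r ^ 1 / (1 - r) + (1 - r)/(Q - r) * Q = 1"
proof -
  have "(1 - r)/(Q - r) * (Q - 1) * r ^ 1 / (1 - r) = (Q - 1) * r / (Q - r)"
    using assms by (simp add: divide_simps)
  moreover have "(Q - 1) * r / (Q - r) + (1 - r)/(Q - r) * Q = ((Q - 1) * r + (1 - r) * Q) / (Q - r)"
    by (simp add: add_divide_distrib)
  moreover have "(Q - 1) * r + (1 - r) * Q = Q - r" by (simp add: algebra_simps)
  ultimately show ?thesis using assms by simp
qed

lemma alg2: fixes r Q :: complex and n :: nat assumes "Q - r \<noteq> 0" "1 - r \<noteq> 0"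
  shows "(1 - r)/(Q - r) * (Q - 1) * r ^ n / (1 - r) = (Q - 1) * r ^ n / (Q - r)"
    using assms by (simp add: divide_simps)

locale nuctx = wpair +
  fixes \<nu> :: "(nat \<Rightarrow> nat) set \<Rightarrow> complex" and \<xi> :: "nat \<Rightarrow> nat"
  assumes \<xi>: "\<xi> \<in> ends q" and d: "distribution q \<nu>"
    and hyp: "\<forall>z\<in>verts q. Kg W' z \<xi> = dist_integral q \<nu> (Kg W z)"
    and rlt: "norm r < 1"
begin

definition Rk where "Rk k = tarc q (pref \<xi> k) - tarc q (pref \<xi> (Suc k))"
definition Bc where "Bc = (1 - r) / (of_nat q - r)"
definition \<beta> where "\<beta> k = Bc * r ^ k * of_nat q ^ k * (of_nat q + 1)"
definition \<mu> where "\<mu> A = (\<Sum>k. \<beta> k * of_real (measure (UU q) (A \<inter> Rk k)))"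

lemma qr: "of_nat q - r \<noteq> 0"
proof
  assume "of_nat q - r = 0"
  then have "norm r = real q" by (metis eq_iff_diff_eq_0 norm_of_nat)
  then show False using rlt q1 by simp
qed

lemma r1: "1 - r \<noteq> 0" using rlt by auto

lemma nu_on_closed: "n \<ge> 1 \<Longrightarrow> \<nu> (tarc q (pref \<xi> n)) = (of_nat q - 1) * r ^ n / (of_nat q - r)"
proof -
  assume "n \<ge> 1"
  then obtain m where n: "n = Suc m" by (cases n) auto
  have e: "\<nu> (tarc q (pref \<xi> (Suc m))) * (1 - r / of_nat q) = r ^ Suc m - r / of_nat q * r ^ m"
    using nu_on[OF d hyp \<xi>, of m] pi_eq by simp
  have "\<nu> (tarc q (pref \<xi> (Suc m))) * (of_nat q - r) = (of_nat q - 1) * r ^ Suc m"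
  proof -
    have "\<nu> (tarc q (pref \<xi> (Suc m))) * (of_nat q - r) = of_nat q * (\<nu> (tarc q (pref \<xi> (Suc m))) * (1 - r / of_nat q))"
      using q1 by (simp add: field_simps)
    also have "\<dots> = of_nat q * (r ^ Suc m - r / of_nat q * r ^ m)" using e by simp
    also have "\<dots> = (of_nat q - 1) * r ^ Suc m" using q1 by (simp add: field_simps)
    finally show ?thesis .
  qed
  then show ?thesis using qr n by (simp add: field_simps)
qed

lemma nu_off_closed:
  assumes xv: "p @ [b] \<in> verts q" and off: "p @ [b] \<noteq> pref \<xi> (Suc (length p))"
  shows "\<nu> (tarc q (p @ [b])) = Bc * r ^ length (confE p \<xi>) / of_nat q ^ (length p - length (confE p \<xi>))"
proof -
  have e: "\<nu> (tarc q (p @ [b])) * (1 - r / of_nat q) = (1 / of_nat q - r / of_nat q) * Q \<xi> p"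
  proof -
    have "c * a * (a' - a) = c * a * a' - c * a * a" by (simp add: algebra_simps)
    then have "c * a * (a' - a) = 1 / of_nat q - r / of_nat q" using ca pi_eq by simp
    then show ?thesis using nu_off[OF d hyp xv off] pi_eq by simp
  qed
  have "\<nu> (tarc q (p @ [b])) * (of_nat q - r) = (1 - r) * Q \<xi> p"
  proof -
    have "\<nu> (tarc q (p @ [b])) * (of_nat q - r) = of_nat q * (\<nu> (tarc q (p @ [b])) * (1 - r / of_nat q))"
      using q1 by (simp add: field_simps)
    also have "\<dots> = of_nat q * ((1 / of_nat q - r / of_nat q) * Q \<xi> p)" using e by simp
    also have "\<dots> = (1 - r) * Q \<xi> p" using q1 by (simp add: field_simps)
    finally show ?thesis .
  qed
  then have "\<nu> (tarc q (p @ [b])) = (1 - r) / (of_nat q - r) * Q \<xi> p" using qr by (simp add: field_simps)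
  then show ?thesis using Q_formula[of \<xi> p] by (simp add: Bc_def)
qed

lemma Rk_sets: "Rk k \<in> sets (UU q)"
  unfolding Rk_def sets_UU using arc_sets pref_verts[OF \<xi>] by blast

lemma meas_Rk: "measure (UU q) (Rk k) = wt q k - wt q (Suc k)"
proof -
  interpret prob_space "UU q" using prob_UU q1 by blast
  have "measure (UU q) (Rk k) = measure (UU q) (tarc q (pref \<xi> k)) - measure (UU q) (tarc q (pref \<xi> (Suc k)))"
    unfolding Rk_def using pref_mono[of k "Suc k" q \<xi>] arc_sets[OF pref_verts[OF \<xi>]]
    by (intro finite_measure_Diff) auto
  then show ?thesis using UU_arc[OF q1 pref_verts[OF \<xi>]] by simp
qed

lemma Rk_disj: "j \<noteq> k \<Longrightarrow> Rk j \<inter> Rk k = {}"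
proof -
  have *: "Rk j \<inter> Rk k = {}" if "j < k" for j k
    using pref_mono[of "Suc j" k q \<xi>] that unfolding Rk_def by auto
  assume "j \<noteq> k" then show ?thesis using *[of j k] *[of k j] by (cases "j < k") auto
qed

lemma on_Rk: "tarc q (pref \<xi> n) \<inter> Rk k = (if n \<le> k then Rk k else {})"
proof (cases "n \<le> k")
  case True then show ?thesis using pref_mono[of n k q \<xi>] unfolding Rk_def by auto
next
  case False then show ?thesis using pref_mono[of "Suc k" n q \<xi>] unfolding Rk_def by auto
qed

lemma off_Rk:
  assumes xv: "p @ [b] \<in> verts q" and off: "p @ [b] \<noteq> pref \<xi> (Suc (length p))"
  shows "tarc q (p @ [b]) \<subseteq> Rk (length (confE p \<xi>))"
proof
  fix \<eta> assume e: "\<eta> \<in> tarc q (p @ [b])"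
  define k0 where "k0 = length (confE p \<xi>)"
  have k0p: "k0 \<le> length p" unfolding k0_def by (rule confE_len_le)
  have pe: "pref \<eta> (Suc (length p)) = p @ [b]" "\<eta> \<in> ends q" using e by (auto simp: tarc_iff)
  have c1: "take k0 p = confE p \<xi>" unfolding k0_def confE_def by (rule lcp_take1[symmetric])
  have c2: "confE p \<xi> = pref \<xi> k0"
    unfolding k0_def confE_def using lcp_take2[of p "pref \<xi> (length p)"] lcp_len1[of p]
    by (metis take_pref min_def)
  have "pref \<eta> k0 = take k0 (pref \<eta> (Suc (length p)))" using k0p by (simp add: take_pref min_def)
  also have "\<dots> = take k0 p" using pe k0p by simp
  finally have in1: "\<eta> \<in> tarc q (pref \<xi> k0)" using c1 c2 pe by (simp add: tarc_iff)
  have "\<eta> \<notin> tarc q (pref \<xi> (Suc k0))"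
  proof
    assume "\<eta> \<in> tarc q (pref \<xi> (Suc k0))"
    then have h: "pref \<eta> (Suc k0) = pref \<xi> (Suc k0)" by (simp add: tarc_iff)
    have "take (Suc k0) (p @ [b]) = pref \<eta> (Suc k0)" using pe k0p by (metis take_pref min_def Suc_le_mono)
    also have "\<dots> = take (Suc k0) (pref \<xi> (Suc (length p)))" using h k0p by (simp add: take_pref min_def)
    finally have "Suc k0 \<le> length (lcp (p @ [b]) (pref \<xi> (Suc (length p))))"
      using k0p by (subst lcp_iff) simp
    moreover have "lcp (p @ [b]) (pref \<xi> (Suc (length p))) = confE p \<xi>"
      using confE_off[OF off] by (simp add: confE_def)
    ultimately show False unfolding k0_def by simp
  qed
  then show "\<eta> \<in> Rk (length (confE p \<xi>))" using in1 unfolding Rk_def k0_def by simp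
qed

lemma beta_wt: "\<beta> k * of_real w = Bc * r ^ k * of_real (real q ^ k * (real q + 1) * w)"
  by (simp add: \<beta>_def)

lemma wt_diff: "real q ^ k * (real q + 1) * (wt q k - wt q (Suc k)) = (if k = 0 then real q else real q - 1)"
proof (cases k)
  case 0 then show ?thesis by (simp add: wt_def mm_def field_simps)
next
  case (Suc m)
  have h1: "wt q (Suc m) * (real q + 1) * real q ^ m = 1" by (rule wt_closed[OF q1])
  have h2: "wt q (Suc (Suc m)) * (real q + 1) * real q ^ Suc m = 1" by (rule wt_closed[OF q1])
  have "real q ^ k * (real q + 1) * (wt q k - wt q (Suc k)) =
      real q * (wt q (Suc m) * (real q + 1) * real q ^ m) - wt q (Suc (Suc m)) * (real q + 1) * real q ^ Suc m"
    using Suc by (simp add: algebra_simps)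
  then show ?thesis using h1 h2 Suc by simp
qed

lemma term_Rk: "\<beta> k * of_real (measure (UU q) (Rk k)) = (if k = 0 then Bc * of_nat q else Bc * (of_nat q - 1) * r ^ k)"
  unfolding meas_Rk beta_wt wt_diff by auto

lemma mu_on: "\<mu> (tarc q (pref \<xi> n)) = \<nu> (tarc q (pref \<xi> n))"
proof -
  have t: "\<beta> k * of_real (measure (UU q) (tarc q (pref \<xi> n) \<inter> Rk k)) =
     (if n \<le> k then (if k = 0 then Bc * of_nat q else Bc * (of_nat q - 1) * r ^ k) else 0)" for k
    unfolding on_Rk by (simp add: term_Rk)
  show ?thesis
  proof (cases "n = 0")
    case True
    have s1: "(\<lambda>k. if 1 \<le> k then Bc * (of_nat q - 1) * r ^ k else 0) sums (Bc * (of_nat q - 1) * r ^ 1 / (1 - r))"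
      by (rule geo_tail[OF rlt])
    have s2: "(\<lambda>k. if k = 0 then Bc * of_nat q else 0) sums (Bc * of_nat q)" by (rule sums_single)
    have "(\<lambda>k. (if 1 \<le> k then Bc * (of_nat q - 1) * r ^ k else 0) + (if k = 0 then Bc * of_nat q else 0))
        sums (Bc * (of_nat q - 1) * r ^ 1 / (1 - r) + Bc * of_nat q)" by (rule sums_add[OF s1 s2])
    moreover have "Bc * (of_nat q - 1) * r ^ 1 / (1 - r) + Bc * of_nat q = 1"
      using alg1[OF qr r1] unfolding Bc_def .
    ultimately have "(\<lambda>k. \<beta> k * of_real (measure (UU q) (tarc q (pref \<xi> n) \<inter> Rk k))) sums 1"
      unfolding t using True by (simp add: if_distrib cong: if_cong) (smt (verit) sums_cong add.right_neutral add_0 not_one_le_zero le_less_linear less_one)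
    then show ?thesis using True nu_root[OF d hyp] unfolding \<mu>_def by (simp add: sums_iff)
  next
    case False
    have "(\<lambda>k. if n \<le> k then Bc * (of_nat q - 1) * r ^ k else 0) sums (Bc * (of_nat q - 1) * r ^ n / (1 - r))"
      by (rule geo_tail[OF rlt])
    moreover have "(\<lambda>k. if n \<le> k then Bc * (of_nat q - 1) * r ^ k else 0) =
       (\<lambda>k. \<beta> k * of_real (measure (UU q) (tarc q (pref \<xi> n) \<inter> Rk k)))"
      unfolding t using False by (auto simp: fun_eq_iff)
    moreover have "Bc * (of_nat q - 1) * r ^ n / (1 - r) = \<nu> (tarc q (pref \<xi> n))"
      using nu_on_closed[of n] False alg2[OF qr r1] unfolding Bc_def by simp
    ultimately show ?thesis unfolding \<mu>_def by (simp add: sums_iff)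
  qed
qed

lemma mu_off:
  assumes xv: "p @ [b] \<in> verts q" and off: "p @ [b] \<noteq> pref \<xi> (Suc (length p))"
  shows "\<mu> (tarc q (p @ [b])) = \<nu> (tarc q (p @ [b]))"
proof -
  define k0 where "k0 = length (confE p \<xi>)"
  have k0p: "k0 \<le> length p" unfolding k0_def by (rule confE_len_le)
  have sub: "tarc q (p @ [b]) \<subseteq> Rk k0" using off_Rk[OF xv off] by (simp add: k0_def)
  have inter: "tarc q (p @ [b]) \<inter> Rk k = (if k = k0 then tarc q (p @ [b]) else {})" for k
    using sub Rk_disj[of k0 k] by auto
  have t: "\<beta> k * of_real (measure (UU q) (tarc q (p @ [b]) \<inter> Rk k)) =
      (if k = k0 then \<beta> k0 * of_real (wt q (Suc (length p))) else 0)" for k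
    unfolding inter using UU_arc[OF q1 xv] by simp
  have "(\<lambda>k. \<beta> k * of_real (measure (UU q) (tarc q (p @ [b]) \<inter> Rk k))) sums (\<beta> k0 * of_real (wt q (Suc (length p))))"
    unfolding t by (rule sums_single)
  moreover have "\<beta> k0 * of_real (wt q (Suc (length p))) = \<nu> (tarc q (p @ [b]))"
  proof -
    have h: "wt q (Suc (length p)) * (real q + 1) * real q ^ length p = 1" by (rule wt_closed[OF q1])
    have pq: "real q ^ length p = real q ^ k0 * real q ^ (length p - k0)"
      using k0p by (simp add: power_add[symmetric])
    have "real q ^ k0 * (real q + 1) * wt q (Suc (length p)) = 1 / real q ^ (length p - k0)"
      using h q1 unfolding pq by (simp add: field_simps)
    then show ?thesis unfolding beta_wt nu_off_closed[OF xv off] k0_def by simp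
  qed
  ultimately show ?thesis unfolding \<mu>_def by (simp add: sums_iff)
qed

lemma mu_arc: assumes y: "y \<in> verts q" shows "\<mu> (tarc q y) = \<nu> (tarc q y)"
proof (cases "y = pref \<xi> (length y)")
  case True then show ?thesis using mu_on by metis
next
  case False
  then have "y \<noteq> []" by auto
  then obtain p b where yp: "y = p @ [b]" by (metis append_butlast_last_id)
  then show ?thesis using mu_off[of p b] y False by simp
qed

lemma mu_cm: "complex_measure_on (bdry_borel q) \<mu>"
proof -
  have "complex_measure_on (UU q) \<mu>"
    unfolding \<mu>_def
  proof (rule cm_series)
    show "finite_measure (UU q)" using prob_UU[OF q1] prob_space.finite_measure by blast
    show "Rk k \<in> sets (UU q)" for k by (rule Rk_sets)
    show "norm (\<beta> k) * measure (UU q) (Rk k) \<le> norm Bc * (real q + 1) * norm r ^ k" for k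
    proof -
      interpret prob_space "UU q" using prob_UU q1 by blast
      have "measure (UU q) (Rk k) \<le> wt q k"
        using meas_Rk[of k] wt_nonneg[of q "Suc k"] by simp
      then have "norm (\<beta> k) * measure (UU q) (Rk k) \<le> norm (\<beta> k) * wt q k" by (simp add: mult_left_mono)
      also have "\<dots> = norm Bc * norm r ^ k * (real q ^ k * (real q + 1) * wt q k)"
      proof -
        have "\<beta> k = Bc * r ^ k * of_real (real q ^ k * (real q + 1))" by (simp add: \<beta>_def)
        moreover have "norm (of_nat q + 1 :: complex) = real q + 1"
          using norm_of_nat[of "Suc q"] by (simp add: add.commute)
        ultimately have "norm (\<beta> k) = norm Bc * norm r ^ k * (real q ^ k * (real q + 1))"
          by (simp add: norm_mult norm_power)
        then show ?thesis by simp
      qed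
      also have "\<dots> \<le> norm Bc * norm r ^ k * (real q + 1)"
        by (intro mult_left_mono wt_bound[OF q1]) auto
      finally show ?thesis by (simp add: algebra_simps)
    qed
    show "summable (\<lambda>k. norm Bc * (real q + 1) * norm r ^ k)"
      using rlt by (intro summable_mult summable_geometric) simp
  qed
  then show ?thesis unfolding complex_measure_on_def by simp
qed

lemma mu_empty: "\<mu> {} = 0" by (simp add: \<mu>_def)

lemma extends: "extends_to_borel q \<nu>"
  unfolding extends_to_borel_def
proof (intro exI conjI)
  show "complex_measure_on (bdry_borel q) \<mu>" by (rule mu_cm)
  show "\<forall>A\<in>bdry_alg q. \<mu> A = \<nu> A"
    using alg_agree[OF q1 d mu_empty cm_fin_add[OF mu_cm] mu_arc] by blast
qed

end


lemma nbrs_eq: assumes x: "x \<in> verts q"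
  shows "nbrs q x = (if x = [] then {} else {butlast x}) \<union> children q x"
proof
  show "nbrs q x \<subseteq> (if x = [] then {} else {butlast x}) \<union> children q x"
    by (auto simp: nbrs_def adj_def children_def)
  show "(if x = [] then {} else {butlast x}) \<union> children q x \<subseteq> nbrs q x"
    using x verts_butlast[OF x] by (auto simp: nbrs_def adj_def children_def) (metis append_butlast_last_id)
qed

lemma finite_nbrs: "x \<in> verts q \<Longrightarrow> finite (nbrs q x)"
  using nbrs_eq finite_children by simp

lemma nbrs_verts: "z \<in> nbrs q x \<Longrightarrow> z \<in> verts q" by (simp add: nbrs_def)

definition en :: "(nat \<Rightarrow> nat) \<Rightarrow> nat list \<Rightarrow> nat list" where
  "en \<eta> x = (if x = pref \<eta> (length x) then pref \<eta> (Suc (length x)) else butlast x)"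

lemma en_nbrs: assumes x: "x \<in> verts q" and \<eta>: "\<eta> \<in> ends q" shows "en \<eta> x \<in> nbrs q x"
proof (cases "x = pref \<eta> (length x)")
  case True
  then have "en \<eta> x = x @ [\<eta> (length x)]" by (simp add: en_def pref_Suc)
  moreover have "x @ [\<eta> (length x)] \<in> verts q" using pref_verts[OF \<eta>, of "Suc (length x)"] True
    by (metis pref_Suc)
  ultimately show ?thesis using x by (simp add: nbrs_eq children_def)
next
  case False
  then have "x \<noteq> []" by auto
  then show ?thesis using False x by (simp add: en_def nbrs_eq)
qed

lemma off_child: assumes "x \<noteq> pref \<eta> (length x)" shows "x @ [b] \<noteq> pref \<eta> (Suc (length x))"
  using assms by (auto simp: pref_Suc)

lemma hor_nbrs:
  assumes x: "x \<in> verts q" and \<omega>: "\<omega> \<in> ends q" and z: "z \<in> nbrs q x"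
  shows "hor z \<omega> = (if z = en \<omega> x then hor x \<omega> - 1 else hor x \<omega> + 1)"
proof (cases "x = pref \<omega> (length x)")
  case on: True
  show ?thesis
  proof (cases "z \<in> children q x")
    case True
    then obtain b where zb: "z = x @ [b]" by (auto simp: children_def)
    have "en \<omega> x = x @ [\<omega> (length x)]" using on by (simp add: en_def pref_Suc)
    moreover have "(x @ [b] = pref \<omega> (Suc (length x))) = (b = \<omega> (length x))"
      using on by (auto simp: pref_Suc)
    ultimately show ?thesis using zb hor_snoc[of x b \<omega>] on by auto
  next
    case False
    then have xn: "x \<noteq> []" and zp: "z = butlast x" using z x by (auto simp: nbrs_eq split: if_splits)
    have xe: "x = butlast x @ [last x]" using xn by simp
    have "x = pref \<omega> (Suc (length (butlast x)))" using on xn by simp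
    then have "hor x \<omega> = hor (butlast x) \<omega> - 1" using hor_snoc[of "butlast x" "last x" \<omega>] xe by (metis)
    moreover have "z \<noteq> en \<omega> x"
    proof -
      have "length (en \<omega> x) = Suc (length x)" using on by (simp add: en_def)
      moreover have "length z < Suc (length x)" using zp by simp
      ultimately show ?thesis by auto
    qed
    ultimately show ?thesis using zp by simp
  qed
next
  case off: False
  then have xn: "x \<noteq> []" by auto
  have xe: "x = butlast x @ [last x]" using xn by simp
  show ?thesis
  proof (cases "z \<in> children q x")
    case True
    then obtain b where zb: "z = x @ [b]" by (auto simp: children_def)
    have "z \<noteq> en \<omega> x" using off zb by (auto simp: en_def dest: arg_cong[of _ _ length])
    moreover have "hor z \<omega> = hor x \<omega> + 1" using hor_snoc[of x b \<omega>] off_child[OF off, of b] zb by simp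
    ultimately show ?thesis by simp
  next
    case False
    then have zp: "z = butlast x" using z x xn by (auto simp: nbrs_eq)
    have "x \<noteq> pref \<omega> (Suc (length (butlast x)))" using off xn by simp
    then have "hor x \<omega> = hor (butlast x) \<omega> + 1" using hor_snoc[of "butlast x" "last x" \<omega>] xe by metis
    then show ?thesis using zp off by (simp add: en_def)
  qed
qed

lemma card_children: assumes x: "x \<in> verts q"
  shows "card (children q x) = (if x = [] then Suc q else q)"
proof -
  have "children q x = (\<lambda>b. x @ [b]) ` {b. b \<le> q \<and> (x = [] \<or> b \<noteq> last x)}"
    using x verts_snoc[of "[]" _ q] by (auto simp: children_def verts_snoc)
  moreover have "inj (\<lambda>b. x @ [b])" by (auto simp: inj_def)
  ultimately have "card (children q x) = card {b. b \<le> q \<and> (x = [] \<or> b \<noteq> last x)}"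
    by (simp add: card_image inj_on_subset)
  moreover have "card {b. b \<le> q \<and> (x = [] \<or> b \<noteq> last x)} = (if x = [] then Suc q else q)"
  proof (cases "x = []")
    case True then show ?thesis by simp
  next
    case False
    then have "last x \<le> q" using x unfolding verts_def by (simp add: last_conv_nth)
    then have "{b. b \<le> q \<and> (x = [] \<or> b \<noteq> last x)} = {..q} - {last x}" using False by auto
    then show ?thesis using False \<open>last x \<le> q\<close> by simp
  qed
  ultimately show ?thesis by simp
qed

lemma card_nbrs: assumes x: "x \<in> verts q" shows "card (nbrs q x) = Suc q"
proof (cases "x = []")
  case True then show ?thesis using card_children[OF x] nbrs_eq[OF x] by simp
next
  case False
  have "butlast x \<notin> children q x" using children_len by fastforce
  then show ?thesis using False card_children[OF x] finite_children by (simp add: nbrs_eq[OF x])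
qed

lemma Kg_nbr:
  assumes x: "x \<in> verts q" and \<eta>: "\<eta> \<in> ends q" and z: "z \<in> nbrs q x" and Wnz: "\<forall>u v. W u v \<noteq> 0"
  shows "Kg W z \<eta> = (if z = en \<eta> x then Kg W x \<eta> / W x z else W z x * Kg W x \<eta>)"
proof (cases "x = pref \<eta> (length x)")
  case on: True
  show ?thesis
  proof (cases "z \<in> children q x")
    case True
    then obtain b where zb: "z = x @ [b]" by (auto simp: children_def)
    show ?thesis
    proof (cases "b = \<eta> (length x)")
      case True
      then have zo: "z = pref \<eta> (Suc (length x))" using on zb by (simp add: pref_Suc)
      have "Kg W z \<eta> = Kg W x \<eta> / W x z"
        using Kg_on[of W \<eta> "Suc (length x)"] Kg_on[of W \<eta> "length x"] on zb zo geo_nz[OF Wnz]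
        by (simp add: pref_Suc geo_root_snoc)
      then show ?thesis using zo on by (simp add: en_def)
    next
      case False
      then have "x @ [b] \<noteq> pref \<eta> (Suc (length x))" using on by (auto simp: pref_Suc)
      moreover have "en \<eta> x = x @ [\<eta> (length x)]" using on by (simp add: en_def pref_Suc)
      ultimately show ?thesis using Kg_off[of x b \<eta> W] zb False by simp
    qed
  next
    case False
    then have xn: "x \<noteq> []" and zp: "z = butlast x" using z x by (auto simp: nbrs_eq split: if_splits)
    have xe: "x = butlast x @ [last x]" using xn by simp
    have zon: "butlast x = pref \<eta> (length (butlast x))" using on xn
      by (metis butlast_conv_take length_butlast take_pref min_def diff_le_self)
    have k1: "Kg W (butlast x) \<eta> = 1 / geo_w W [] (butlast x)" using zon Kg_on by metis
    have "Kg W x \<eta> = 1 / geo_w W [] x" using on Kg_on by metis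
    also have "geo_w W [] x = geo_w W [] (butlast x) * W (butlast x) x"
      using geo_root_snoc[of W "butlast x" "last x"] xe by metis
    finally have k2: "Kg W x \<eta> = 1 / (geo_w W [] (butlast x) * W (butlast x) x)" .
    have "Kg W z \<eta> = W z x * Kg W x \<eta>"
      unfolding zp k1 k2 using Wnz geo_nz[OF Wnz, of "[]" "butlast x"] by (simp add: field_simps)
    moreover have "z \<noteq> en \<eta> x"
    proof -
      have "length (en \<eta> x) = Suc (length x)" using on by (simp add: en_def)
      moreover have "length z < Suc (length x)" using zp by simp
      ultimately show ?thesis by auto
    qed
    ultimately show ?thesis by simp
  qed
next
  case off: False
  then have xn: "x \<noteq> []" by auto
  have xe: "x = butlast x @ [last x]" using xn by simp
  show ?thesis
  proof (cases "z \<in> children q x")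
    case True
    then obtain b where zb: "z = x @ [b]" by (auto simp: children_def)
    have "z \<noteq> en \<eta> x" using off zb by (auto simp: en_def dest: arg_cong[of _ _ length])
    then show ?thesis using Kg_off[OF off_child[OF off, of b], of W] zb by simp
  next
    case False
    then have zp: "z = butlast x" using z x xn by (auto simp: nbrs_eq)
    have "x \<noteq> pref \<eta> (Suc (length (butlast x)))" using off xn by simp
    then have "Kg W x \<eta> = W x z * Kg W z \<eta>" using Kg_off[of "butlast x" "last x" \<eta> W] xe zp by metis
    then show ?thesis using zp off Wnz by (simp add: en_def field_simps)
  qed
qed


lemma trans_nbr:
  assumes x: "x \<in> verts q" and \<omega>: "\<omega> \<in> ends q" and z: "z \<in> nbrs q x"
  shows "trans_prob q \<alpha> \<omega> x z = (if z = en \<omega> x then 1 - \<alpha> else \<alpha> / real q)"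
proof -
  have "adj x z" using z by (simp add: nbrs_def)
  then show ?thesis using hor_nbrs[OF x \<omega> z] by (auto simp: trans_prob_def)
qed

lemma edge_nbr1:
  assumes x: "x \<in> verts q" and \<omega>: "\<omega> \<in> ends q" and z: "z \<in> nbrs q x"
  shows "edge_w P M \<omega> z x = (if z = en \<omega> x then P else M)"
  using hor_nbrs[OF x \<omega> z] by (auto simp: edge_w_def)

lemma edge_nbr2:
  assumes x: "x \<in> verts q" and \<omega>: "\<omega> \<in> ends q" and z: "z \<in> nbrs q x"
  shows "edge_w P M \<omega> x z = (if z = en \<omega> x then M else P)"
  using hor_nbrs[OF x \<omega> z] by (auto simp: edge_w_def)

lemma cc_e1: fixes a :: complex and \<alpha> :: real and q :: nat
  assumes a0: "a \<noteq> 0" and \<alpha>0: "0 < \<alpha>" and \<alpha>1: "\<alpha> < 1" and q: "q \<ge> 1"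
  shows "of_real (\<alpha> / real q) / (of_real (\<alpha> / ((1 - \<alpha>) * real q)) * a) = of_real (1 - \<alpha>) / a"
proof -
  have cr: "(\<alpha> / real q) / (\<alpha> / ((1 - \<alpha>) * real q)) = 1 - \<alpha>" using \<alpha>0 \<alpha>1 q by (simp add: field_simps)
  have "of_real (\<alpha> / real q) / (of_real (\<alpha> / ((1 - \<alpha>) * real q)) * a) =
     (of_real ((\<alpha> / real q) / (\<alpha> / ((1 - \<alpha>) * real q))) :: complex) / a"
    by (metis divide_divide_eq_left of_real_divide)
  then show ?thesis by (simp only: cr)
qed
lemma cc_e2: fixes a :: complex and \<alpha> :: real and q :: nat
  assumes a0: "a \<noteq> 0" and \<alpha>0: "0 < \<alpha>" and \<alpha>1: "\<alpha> < 1" and q: "q \<ge> 1"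
  shows "of_real (1 - \<alpha>) * (of_real (\<alpha> / ((1 - \<alpha>) * real q)) * a) = of_real (\<alpha> / real q) * a"
proof -
  have cr: "(1 - \<alpha>) * (\<alpha> / ((1 - \<alpha>) * real q)) = \<alpha> / real q" using \<alpha>0 \<alpha>1 q by (simp add: field_simps)
  have "of_real (1 - \<alpha>) * (of_real (\<alpha> / ((1 - \<alpha>) * real q)) * a) =
     (of_real ((1 - \<alpha>) * (\<alpha> / ((1 - \<alpha>) * real q))) :: complex) * a"
    by (simp only: of_real_mult mult.assoc)
  then show ?thesis using cr by simp
qed

lemma harmonic:
  fixes lam a :: complex and \<alpha> :: real
  assumes q: "q \<ge> 1" and x: "x \<in> verts q" and \<omega>: "\<omega> \<in> ends q" and \<eta>: "\<eta> \<in> ends q"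
    and a0: "a \<noteq> 0" and \<alpha>0: "0 < \<alpha>" and \<alpha>1: "\<alpha> < 1"
    and quad: "of_real \<alpha> * a + of_real (1 - \<alpha>) / a = lam"
  shows "(\<Sum>z\<in>nbrs q x. of_real (trans_prob q \<alpha> \<omega> x z) * Kg (edge_w (cc q \<alpha> * a) a \<omega>) z \<eta>)
     = lam * Kg (edge_w (cc q \<alpha> * a) a \<omega>) x \<eta>"
proof -
  define c where "c = cc q \<alpha>"
  define W where "W = edge_w (c * a) a \<omega>"
  have c0: "c \<noteq> 0" using \<alpha>0 \<alpha>1 q by (simp add: c_def cc_def)
  have Wnz: "\<forall>u v. W u v \<noteq> 0" using c0 a0 by (simp add: W_def edge_w_def)
  define N where "N = nbrs q x"
  define v where "v = en \<eta> x"
  define w where "w = en \<omega> x"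
  have fin: "finite N" unfolding N_def using finite_nbrs[OF x] .
  have cardN: "card N = Suc q" unfolding N_def using card_nbrs[OF x] .
  have vN: "v \<in> N" unfolding v_def N_def by (rule en_nbrs[OF x \<eta>])
  have wN: "w \<in> N" unfolding w_def N_def by (rule en_nbrs[OF x \<omega>])
  define g where "g z = of_real (if z = w then 1 - \<alpha> else \<alpha> / real q) *
     (if z = v then 1 / (if z = w then a else c * a) else (if z = w then c * a else a))" for z
  have summand: "of_real (trans_prob q \<alpha> \<omega> x z) * Kg W z \<eta> = Kg W x \<eta> * g z" if z: "z \<in> N" for z
  proof -
    have zn: "z \<in> nbrs q x" using z by (simp add: N_def)
    have "Kg W z \<eta> = (if z = v then Kg W x \<eta> / W x z else W z x * Kg W x \<eta>)"
      using Kg_nbr[OF x \<eta> zn Wnz] by (simp add: v_def)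
    moreover have "W x z = (if z = w then a else c * a)" "W z x = (if z = w then c * a else a)"
      using edge_nbr1[OF x \<omega> zn] edge_nbr2[OF x \<omega> zn] by (simp_all add: W_def w_def)
    moreover have "trans_prob q \<alpha> \<omega> x z = (if z = w then 1 - \<alpha> else \<alpha> / real q)"
      using trans_nbr[OF x \<omega> zn] by (simp add: w_def)
    ultimately show ?thesis by (cases "z = v"; cases "z = w") (simp_all add: g_def)
  qed
  have rest: "g z = of_real (\<alpha> / real q) * a" if "z \<noteq> v" "z \<noteq> w" for z using that by (simp add: g_def)
  have cq: "c * of_real ((1 - \<alpha>) * real q) = of_real \<alpha>"
    using \<alpha>0 \<alpha>1 q by (simp add: c_def cc_def field_simps)
  have sumg: "(\<Sum>z\<in>N. g z) = lam"
  proof (cases "v = w")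
    case True
    have "(\<Sum>z\<in>N. g z) = g v + (\<Sum>z\<in>N - {v}. g z)" using sum.remove[OF fin vN] .
    also have "(\<Sum>z\<in>N - {v}. g z) = (\<Sum>z\<in>N - {v}. of_real (\<alpha> / real q) * a)"
      using rest True by (intro sum.cong) auto
    also have "\<dots> = of_nat q * (of_real (\<alpha> / real q) * a)" using cardN vN fin by simp
    also have "g v = of_real (1 - \<alpha>) / a" using True by (simp add: g_def)
    finally show ?thesis using q quad by (simp add: field_simps)
  next
    case False
    have "(\<Sum>z\<in>N. g z) = g v + (\<Sum>z\<in>N - {v}. g z)" using sum.remove[OF fin vN] .
    also have "(\<Sum>z\<in>N - {v}. g z) = g w + (\<Sum>z\<in>N - {v} - {w}. g z)"
      using sum.remove[of "N - {v}" w g] fin wN False by auto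
    also have "(\<Sum>z\<in>N - {v} - {w}. g z) = (\<Sum>z\<in>N - {v} - {w}. of_real (\<alpha> / real q) * a)"
      using rest by (intro sum.cong) auto
    also have "\<dots> = of_nat (q - 1) * (of_real (\<alpha> / real q) * a)"
      using cardN vN wN False fin by (simp add: card_Diff_subset)
    also have "g v = of_real (\<alpha> / real q) / (c * a)" using False by (simp add: g_def)
    also have "g w = of_real (1 - \<alpha>) * (c * a)" using False by (simp add: g_def)
    finally have e: "(\<Sum>z\<in>N. g z) = of_real (\<alpha> / real q) / (c * a) + (of_real (1 - \<alpha>) * (c * a) +
        of_nat (q - 1) * (of_real (\<alpha> / real q) * a))" .
    have e1: "of_real (\<alpha> / real q) / (c * a) = of_real (1 - \<alpha>) / a"
      unfolding c_def cc_def using cc_e1[OF a0 \<alpha>0 \<alpha>1 q] .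
    have e2: "of_real (1 - \<alpha>) * (c * a) = of_real (\<alpha> / real q) * a"
      unfolding c_def cc_def using cc_e2[OF a0 \<alpha>0 \<alpha>1 q] .
    have e3: "of_real (\<alpha> / real q) * a + of_nat (q - 1) * (of_real (\<alpha> / real q) * a) = of_real \<alpha> * a"
      using q by (simp add: field_simps of_nat_diff)
    show ?thesis unfolding e e1 e2 using e3 quad by (simp add: algebra_simps)
  qed
  have "(\<Sum>z\<in>N. of_real (trans_prob q \<alpha> \<omega> x z) * Kg W z \<eta>) = (\<Sum>z\<in>N. Kg W x \<eta> * g z)"
    using summand by (intro sum.cong) auto
  also have "\<dots> = Kg W x \<eta> * lam" using sumg by (simp add: sum_distrib_left[symmetric])
  finally show ?thesis by (simp add: N_def W_def c_def mult.commute)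
qed


definition posr :: "complex \<Rightarrow> bool" where "posr z \<longleftrightarrow> (\<exists>t>0. z = of_real t)"

lemma posr_mult: "posr a \<Longrightarrow> posr b \<Longrightarrow> posr (a * b)"
  unfolding posr_def by (metis mult_pos_pos of_real_mult)
lemma posr_div: "posr a \<Longrightarrow> posr b \<Longrightarrow> posr (a / b)"
  unfolding posr_def by (metis divide_pos_pos of_real_divide)
lemma posr_1: "posr 1" unfolding posr_def by (intro exI[of _ 1]) simp
lemma posr_prod: "finite S \<Longrightarrow> (\<And>i. i \<in> S \<Longrightarrow> posr (f i)) \<Longrightarrow> posr (prod f S)"
  by (induction S rule: finite_induct) (auto intro: posr_mult posr_1)
lemma posr_Re: "posr z \<Longrightarrow> z = of_real (Re z) \<and> Re z > 0"
  unfolding posr_def by auto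

lemma posr_geo: "\<forall>u v. posr (W u v) \<Longrightarrow> posr (geo_w W x y)"
  unfolding geo_w_def Let_def by (intro posr_mult posr_prod) auto

lemma posr_Kg: "\<forall>u v. posr (W u v) \<Longrightarrow> posr (Kg W x \<eta>)"
  unfolding Kg_def by (intro posr_div posr_geo)

lemma posr_edge: "posr P \<Longrightarrow> posr M \<Longrightarrow> \<forall>u v. posr (edge_w P M \<omega> u v)"
  by (simp add: edge_w_def)

context
  fixes \<alpha> \<rho> :: real and lam :: complex
  assumes \<alpha>0: "0 < \<alpha>" and \<alpha>1: "\<alpha> < 1" and lamr: "lam \<notin> complex_of_real ` {-\<rho>..\<rho>}"
    and \<rho>: "\<rho> = 2 * sqrt (\<alpha> * (1 - \<alpha>))"
begin

lemma F_sum: "Fm \<alpha> lam + Fmt \<alpha> lam = lam / of_real \<alpha>"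
  unfolding Fm_sw[OF \<alpha>0 \<alpha>1 lamr \<rho>] Fmt_sw[OF \<alpha>0 \<alpha>1 lamr \<rho>] using \<alpha>0 by (simp add: field_simps)

lemma quad_m: "of_real \<alpha> * Fm \<alpha> lam + of_real (1 - \<alpha>) / Fm \<alpha> lam = lam"
proof -
  have "of_real (1 - \<alpha>) / Fm \<alpha> lam = of_real \<alpha> * Fmt \<alpha> lam"
    using F_prod[OF \<alpha>0 \<alpha>1 lamr \<rho>] Fm_nz[OF \<alpha>0 \<alpha>1 lamr \<rho>] \<alpha>0 by (simp add: field_simps)
  then show ?thesis using F_sum \<alpha>0 by (simp add: field_simps)
qed

lemma quad_t: "of_real \<alpha> * Fmt \<alpha> lam + of_real (1 - \<alpha>) / Fmt \<alpha> lam = lam"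
proof -
  have "of_real (1 - \<alpha>) / Fmt \<alpha> lam = of_real \<alpha> * Fm \<alpha> lam"
    using F_prod[OF \<alpha>0 \<alpha>1 lamr \<rho>] Fmt_nz[OF \<alpha>0 \<alpha>1 lamr \<rho>] \<alpha>0 by (simp add: field_simps)
  then show ?thesis using F_sum \<alpha>0 by (simp add: field_simps)
qed

lemma real_F:
  assumes re: "lam \<in> \<real>" "Re lam > \<rho>"
  shows "\<exists>fm fmt. Fm \<alpha> lam = of_real fm \<and> Fmt \<alpha> lam = of_real fmt \<and> 0 < fm \<and> fm < fmt"
proof -
  define l where "l = Re lam"
  have lam_l: "lam = of_real l" using re(1) by (simp add: l_def complex_is_Real_iff complex_eq_iff)
  have lpos: "l > \<rho>" using re(2) by (simp add: l_def)
  have r0: "\<rho> \<ge> 0" using rho_sq(2)[OF \<alpha>0 \<alpha>1 lamr \<rho>] .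
  have lp: "l > 0" using lpos r0 by simp
  define w where "w = 1 - 4 * (\<alpha> * (1 - \<alpha>)) / l\<^sup>2"
  have ab: "4 * (\<alpha> * (1 - \<alpha>)) < l\<^sup>2"
  proof -
    have "\<rho>\<^sup>2 < l\<^sup>2" using lpos r0 by (intro power_strict_mono) auto
    then show ?thesis using rho_sq(1)[OF \<alpha>0 \<alpha>1 lamr \<rho>] by simp
  qed
  have w0: "w > 0" using ab lp by (simp add: w_def field_simps)
  have w1: "w < 1" using \<alpha>0 \<alpha>1 lp by (simp add: w_def)
  have sw_eq: "sw \<alpha> lam = of_real (sqrt w)"
  proof -
    have "sw \<alpha> lam = csqrt (1 - 4 * of_real (\<alpha> * (1 - \<alpha>)) / lam\<^sup>2)"
      by (rule sw_def[OF \<alpha>0 \<alpha>1 lamr \<rho>])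
    also have "\<dots> = csqrt (of_real w)" by (simp add: w_def lam_l)
    finally have "sw \<alpha> lam = csqrt (of_real w)" .
    then show ?thesis using w0 by (simp add: csqrt_of_real)
  qed
  have s1: "sqrt w < 1" using w1 w0 by simp
  define fm where "fm = l / (2 * \<alpha>) * (1 - sqrt w)"
  define fmt where "fmt = l / (2 * \<alpha>) * (1 + sqrt w)"
  have "Fm \<alpha> lam = lam / (2 * of_real \<alpha>) * (1 - sw \<alpha> lam)" by (rule Fm_sw[OF \<alpha>0 \<alpha>1 lamr \<rho>])
  also have "\<dots> = of_real fm" unfolding sw_eq fm_def by (simp add: lam_l)
  finally have "Fm \<alpha> lam = of_real fm" .
  moreover have "Fmt \<alpha> lam = lam / (2 * of_real \<alpha>) * (1 + sw \<alpha> lam)" by (rule Fmt_sw[OF \<alpha>0 \<alpha>1 lamr \<rho>])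
  moreover have "lam / (2 * of_real \<alpha>) * (1 + sw \<alpha> lam) = of_real fmt" unfolding sw_eq fmt_def by (simp add: lam_l)
  moreover have "0 < fm" using lp \<alpha>0 s1 by (simp add: fm_def)
  moreover have "fm < fmt"
  proof -
    have "l * (1 - sqrt w) < l * (1 + sqrt w)" using lp w0 by simp
    then show ?thesis using \<alpha>0 unfolding fm_def fmt_def by (simp add: divide_strict_right_mono)
  qed
  ultimately show ?thesis by (metis)
qed

end


lemma alg_sets: "A \<in> bdry_alg q \<Longrightarrow> A \<in> sets (bdry_borel q)"
  unfolding bdry_alg_def using basic_sets_sets by (auto intro!: sets.finite_Union)

locale realctx = nuctx +
  fixes \<alpha> :: real and lam :: complex and rr :: real and l :: real
  assumes q2: "q \<ge> 2" and \<omega>: "\<omega> \<in> ends q" and \<alpha>0: "0 < \<alpha>" and \<alpha>1: "\<alpha> < 1"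
    and cdef: "c = cc q \<alpha>"
    and quad: "of_real \<alpha> * a + of_real (1 - \<alpha>) / a = lam"
    and quad': "of_real \<alpha> * a' + of_real (1 - \<alpha>) / a' = lam"
    and lam_l: "lam = of_real l"
    and pa: "posr a" and pa': "posr a'"
    and rr: "r = of_real rr" "0 < rr"
begin

lemma rr1: "rr < 1" using rlt rr by simp

lemma pc: "posr c" unfolding cdef cc_def posr_def using \<alpha>0 \<alpha>1 q1
  by (intro exI[of _ "\<alpha> / ((1 - \<alpha>) * real q)"]) auto

lemma posW: "\<forall>u v. posr (W u v)" unfolding W_def using pc pa by (intro posr_edge posr_mult)
lemma posW': "\<forall>u v. posr (W' u v)" unfolding W'_def using pc pa' by (intro posr_edge posr_mult)

definition Bcr where "Bcr = (1 - rr) / (real q - rr)"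
definition \<beta>r where "\<beta>r k = Bcr * rr ^ k * real q ^ k * (real q + 1)"

lemma qrr: "real q - rr > 0" using q2 rr1 by simp
lemma Bcr_pos: "Bcr > 0" unfolding Bcr_def using qrr rr1 by simp

lemma Bc_real: "Bc = of_real Bcr" unfolding Bc_def Bcr_def rr by simp
lemma beta_real: "\<beta> k = of_real (\<beta>r k)" unfolding \<beta>_def \<beta>r_def Bc_real rr by simp
lemma beta_nonneg: "\<beta>r k \<ge> 0" unfolding \<beta>r_def using Bcr_pos rr by simp

lemma bound_r: "\<beta>r k * measure (UU q) (Rk k) \<le> Bcr * (real q + 1) * rr ^ k"
proof -
  have "measure (UU q) (Rk k) \<le> wt q k" using meas_Rk[of k] wt_nonneg[of q "Suc k"] by simp
  then have "\<beta>r k * measure (UU q) (Rk k) \<le> \<beta>r k * wt q k" using beta_nonneg by (simp add: mult_left_mono)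
  also have "\<dots> = Bcr * rr ^ k * (real q ^ k * (real q + 1) * wt q k)" by (simp add: \<beta>r_def algebra_simps)
  also have "\<dots> \<le> Bcr * rr ^ k * (real q + 1)"
    using Bcr_pos rr by (intro mult_left_mono wt_bound[OF q1]) auto
  finally show ?thesis by (simp add: algebra_simps)
qed

lemma summ_bound: "summable (\<lambda>k. Bcr * (real q + 1) * rr ^ k)"
  using rr rr1 by (intro summable_mult summable_geometric) simp

lemma sum_r: "A \<in> sets (UU q) \<Longrightarrow> summable (\<lambda>k. \<beta>r k * measure (UU q) (A \<inter> Rk k))"
proof (rule summable_comparison_test'[OF summ_bound])
  fix k assume A: "A \<in> sets (UU q)"
  interpret prob_space "UU q" using prob_UU q1 by blast
  have "measure (UU q) (A \<inter> Rk k) \<le> measure (UU q) (Rk k)" using A Rk_sets by (intro finite_measure_mono) auto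
  then have "\<beta>r k * measure (UU q) (A \<inter> Rk k) \<le> \<beta>r k * measure (UU q) (Rk k)"
    using beta_nonneg by (simp add: mult_left_mono)
  then show "norm (\<beta>r k * measure (UU q) (A \<inter> Rk k)) \<le> Bcr * (real q + 1) * rr ^ k"
    using bound_r[of k] beta_nonneg[of k] by simp
qed

lemma mu_real: "A \<in> sets (UU q) \<Longrightarrow> \<mu> A = of_real (\<Sum>k. \<beta>r k * measure (UU q) (A \<inter> Rk k))"
  unfolding \<mu>_def beta_real by (subst suminf_of_real[OF sum_r]) auto

lemma nu_posr: assumes y: "y \<in> verts q" shows "posr (\<nu> (tarc q y))"
proof (cases "y = pref \<xi> (length y)")
  case True
  show ?thesis
  proof (cases "length y = 0")
    case True then show ?thesis using nu_root[OF d hyp] posr_1 by simp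
  next
    case False
    then have "\<nu> (tarc q y) = (of_nat q - 1) * r ^ length y / (of_nat q - r)"
      using nu_on_closed[of "length y"] True by (metis One_nat_def Suc_leI neq0_conv)
    also have "\<dots> = of_real ((real q - 1) * rr ^ length y / (real q - rr))" unfolding rr by simp
    finally show ?thesis unfolding posr_def using q2 qrr rr by (intro exI[of _ "(real q - 1) * rr ^ length y / (real q - rr)"]) auto
  qed
next
  case False
  then have "y \<noteq> []" by auto
  then obtain p b where yp: "y = p @ [b]" by (metis append_butlast_last_id)
  then have "\<nu> (tarc q y) = Bc * r ^ length (confE p \<xi>) / of_nat q ^ (length p - length (confE p \<xi>))"
    using nu_off_closed[of p b] y False by simp
  also have "\<dots> = of_real (Bcr * rr ^ length (confE p \<xi>) / real q ^ (length p - length (confE p \<xi>)))"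
    unfolding Bc_real rr by simp
  finally show ?thesis unfolding posr_def using Bcr_pos rr q1
    by (intro exI[of _ "Bcr * rr ^ length (confE p \<xi>) / real q ^ (length p - length (confE p \<xi>))"]) auto
qed

lemma measure_part:
  "\<exists>M. prob_space M \<and> space M = ends q \<and> sets M = sets (bdry_borel q) \<and>
       (\<forall>A\<in>bdry_alg q. \<nu> A = complex_of_real (measure M A)) \<and>
       (\<forall>U. openin (bdry_top q) U \<and> U \<noteq> {} \<longrightarrow> measure M U > 0)"
proof -
  have tot: "(\<Sum>k. \<beta>r k * measure (UU q) (space (UU q) \<inter> Rk k)) = 1"
  proof -
    have "space (UU q) = tarc q (pref \<xi> 0)" by (simp add: space_UU tarc_Nil)
    then have "of_real (\<Sum>k. \<beta>r k * measure (UU q) (space (UU q) \<inter> Rk k)) = \<mu> (tarc q (pref \<xi> 0))"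
      using mu_real[of "space (UU q)"] sets.top[of "UU q"] by simp
    also have "\<dots> = 1" using mu_on[of 0] nu_root[OF d hyp] by simp
    finally show ?thesis by simp
  qed
  obtain M where M: "prob_space M" "space M = space (UU q)" "sets M = sets (UU q)"
    "\<forall>A\<in>sets (UU q). measure M A = (\<Sum>k. \<beta>r k * measure (UU q) (A \<inter> Rk k))"
    using real_series_measure[OF prob_UU[OF q1] Rk_sets beta_nonneg bound_r summ_bound tot] by blast
  have agree: "\<mu> A = of_real (measure M A)" if "A \<in> sets (bdry_borel q)" for A
    using M(4) mu_real that by simp
  have alg: "\<forall>A\<in>bdry_alg q. \<mu> A = \<nu> A"
    using alg_agree[OF q1 d mu_empty cm_fin_add[OF mu_cm] mu_arc] by blast
  have pos: "measure M U > 0" if U: "openin (bdry_top q) U" "U \<noteq> {}" for U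
  proof -
    obtain \<eta> where "\<eta> \<in> U" using U by blast
    then obtain y where y: "y \<in> verts q" "tarc q y \<subseteq> U" using open_arcs[OF U(1)] by blast
    interpret prob_space M by (rule M(1))
    have Us: "U \<in> sets M" using open_sets[OF U(1)] M(3) by simp
    have ys: "tarc q y \<in> sets M" using arc_sets[OF y(1)] M(3) by simp
    obtain t where t: "t > 0" "\<nu> (tarc q y) = of_real t" using nu_posr[OF y(1)] unfolding posr_def by blast
    have "of_real (measure M (tarc q y)) = \<nu> (tarc q y)"
      using agree[OF arc_sets[OF y(1)]] mu_arc[OF y(1)] by simp
    then have "measure M (tarc q y) = t" using t by simp
    moreover have "measure M (tarc q y) \<le> measure M U" using y(2) Us ys by (intro finite_measure_mono)
    ultimately show ?thesis using t by simp
  qed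
  show ?thesis
    using M(1-3) agree alg pos alg_sets by (intro exI[of _ M]) (auto simp: space_UU)
qed

end


context realctx
begin

definition a0 where "a0 = pref \<xi> 1"
definition TA where "TA = tarc q a0"
definition FA where "FA x \<eta> = (if \<eta> \<in> TA then 1 else 0) * Kg W x \<eta>"
definition FB where "FB x \<eta> = (if \<eta> \<in> TA then 0 else 1) * Kg W x \<eta>"
definition GA where "GA x = lsum q \<nu> (FA x) (Suc (length x))"
definition GB where "GB x = lsum q \<nu> (FB x) (Suc (length x))"

lemma a0v: "a0 \<in> verts q" unfolding a0_def by (rule pref_verts[OF \<xi>])
lemma a0l: "length a0 = 1" by (simp add: a0_def)

lemma TA_iff: "\<eta> \<in> tarc q y \<Longrightarrow> length y \<ge> 1 \<Longrightarrow> (\<eta> \<in> TA \<longleftrightarrow> take 1 y = a0)"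
  unfolding TA_def tarc_iff using a0l by (auto simp: take_pref min_def) (metis take_pref min_def)+

lemma lconstA0: assumes "length x \<le> N" "1 \<le> N" "y \<in> tlevel q N" "\<eta> \<in> tarc q y" "\<eta>' \<in> tarc q y"
  shows "(\<eta> \<in> TA \<longleftrightarrow> \<eta>' \<in> TA) \<and> Kg W x \<eta> = Kg W x \<eta>'"
proof -
  have k: "lconst q (Kg W x) N" unfolding Kg_def by (rule lconst_confE) (use assms in simp)
  have ly: "length y \<ge> 1" using assms by (simp add: tlevel_def)
  have "(\<eta> \<in> TA) = (\<eta>' \<in> TA)" using TA_iff[OF assms(4) ly] TA_iff[OF assms(5) ly] by simp
  moreover have "Kg W x \<eta> = Kg W x \<eta>'" using k assms unfolding lconst_def by blast
  ultimately show ?thesis by simp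
qed

lemma lconstA: assumes "length x \<le> N" "1 \<le> N" shows "lconst q (FA x) N" "lconst q (FB x) N"
proof -
  show "lconst q (FA x) N" unfolding lconst_def
  proof (intro ballI)
    fix y \<eta> \<eta>' assume h: "y \<in> tlevel q N" "\<eta> \<in> tarc q y" "\<eta>' \<in> tarc q y"
    show "FA x \<eta> = FA x \<eta>'" using lconstA0[OF assms h] unfolding FA_def by simp
  qed
  show "lconst q (FB x) N" unfolding lconst_def
  proof (intro ballI)
    fix y \<eta> \<eta>' assume h: "y \<in> tlevel q N" "\<eta> \<in> tarc q y" "\<eta>' \<in> tarc q y"
    show "FB x \<eta> = FB x \<eta>'" using lconstA0[OF assms h] unfolding FB_def by simp
  qed
qed

lemma GA_N: assumes "length x \<le> N" "1 \<le> N" shows "GA x = lsum q \<nu> (FA x) N"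
proof -
  define N0 where "N0 = max (length x) 1"
  have c: "lconst q (FA x) N0" by (rule lconstA) (auto simp: N0_def)
  have "lsum q \<nu> (FA x) (Suc (length x)) = lsum q \<nu> (FA x) N0" by (rule lsum_mono[OF q1 d c]) (simp add: N0_def)
  moreover have "lsum q \<nu> (FA x) N = lsum q \<nu> (FA x) N0" by (rule lsum_mono[OF q1 d c]) (use assms in \<open>simp add: N0_def\<close>)
  ultimately show ?thesis unfolding GA_def by simp
qed

lemma GB_N: assumes "length x \<le> N" "1 \<le> N" shows "GB x = lsum q \<nu> (FB x) N"
proof -
  define N0 where "N0 = max (length x) 1"
  have c: "lconst q (FB x) N0" by (rule lconstA) (auto simp: N0_def)
  have "lsum q \<nu> (FB x) (Suc (length x)) = lsum q \<nu> (FB x) N0" by (rule lsum_mono[OF q1 d c]) (simp add: N0_def)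
  moreover have "lsum q \<nu> (FB x) N = lsum q \<nu> (FB x) N0" by (rule lsum_mono[OF q1 d c]) (use assms in \<open>simp add: N0_def\<close>)
  ultimately show ?thesis unfolding GB_def by simp
qed

lemma GA_GB: assumes x: "x \<in> verts q" shows "GA x + GB x = Kg W' x \<xi>"
proof -
  have "GA x + GB x = (\<Sum>y\<in>tlevel q (Suc (length x)). (FA x (rep q y) + FB x (rep q y)) * \<nu> (tarc q y))"
    unfolding GA_def GB_def lsum_def by (simp add: sum.distrib[symmetric] distrib_right)
  also have "\<dots> = lsum q \<nu> (Kg W x) (Suc (length x))"
    unfolding lsum_def FA_def FB_def by (intro sum.cong) auto
  also have "\<dots> = dist_integral q \<nu> (Kg W x)"
    by (rule dist_integral_eq[symmetric, OF q1 d]) (unfold Kg_def, rule lconst_confE, simp)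
  also have "\<dots> = Kg W' x \<xi>" using hyp x by simp
  finally show ?thesis .
qed

lemma harm_gen:
  assumes x: "x \<in> verts q" and I: "\<And>\<eta>. I \<eta> = 0 \<or> I \<eta> = 1"
  shows "(\<Sum>z\<in>nbrs q x. of_real (trans_prob q \<alpha> \<omega> x z) * lsum q \<nu> (\<lambda>\<eta>. I \<eta> * Kg W z \<eta>) N)
       = lam * lsum q \<nu> (\<lambda>\<eta>. I \<eta> * Kg W x \<eta>) N"
proof -
  have "(\<Sum>z\<in>nbrs q x. of_real (trans_prob q \<alpha> \<omega> x z) * lsum q \<nu> (\<lambda>\<eta>. I \<eta> * Kg W z \<eta>) N)
      = (\<Sum>y\<in>tlevel q N. (\<Sum>z\<in>nbrs q x. of_real (trans_prob q \<alpha> \<omega> x z) * Kg W z (rep q y)) * (I (rep q y) * \<nu> (tarc q y)))"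
    unfolding lsum_def by (simp add: sum_distrib_left sum_distrib_right algebra_simps) (rule sum.swap)
  also have "\<dots> = (\<Sum>y\<in>tlevel q N. lam * Kg W x (rep q y) * (I (rep q y) * \<nu> (tarc q y)))"
  proof (rule sum.cong[OF refl])
    fix y assume y: "y \<in> tlevel q N"
    have "rep q y \<in> ends q" using rep_in[OF q1, of y] y by (auto simp: tlevel_def tarc_iff)
    have Weq: "W = edge_w (cc q \<alpha> * a) a \<omega>" using W_def cdef by simp
    have "(\<Sum>z\<in>nbrs q x. of_real (trans_prob q \<alpha> \<omega> x z) * Kg W z (rep q y)) = lam * Kg W x (rep q y)"
      using harmonic[OF q1 x \<omega> \<open>rep q y \<in> ends q\<close> a0 \<alpha>0 \<alpha>1 quad] unfolding Weq[symmetric] .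
    then show "(\<Sum>z\<in>nbrs q x. of_real (trans_prob q \<alpha> \<omega> x z) * Kg W z (rep q y)) * (I (rep q y) * \<nu> (tarc q y)) =
        lam * Kg W x (rep q y) * (I (rep q y) * \<nu> (tarc q y))" by simp
  qed
  also have "\<dots> = lam * lsum q \<nu> (\<lambda>\<eta>. I \<eta> * Kg W x \<eta>) N"
    unfolding lsum_def by (simp add: sum_distrib_left algebra_simps)
  finally show ?thesis .
qed

lemma nbrs_len: "z \<in> nbrs q x \<Longrightarrow> length z < Suc (Suc (length x))"
  by (auto simp: nbrs_def adj_def)

lemma harmA: assumes x: "x \<in> verts q"
  shows "(\<Sum>z\<in>nbrs q x. of_real (trans_prob q \<alpha> \<omega> x z) * GA z) = lam * GA x"
proof -
  define N where "N = Suc (Suc (length x))"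
  have "(\<Sum>z\<in>nbrs q x. of_real (trans_prob q \<alpha> \<omega> x z) * GA z) =
     (\<Sum>z\<in>nbrs q x. of_real (trans_prob q \<alpha> \<omega> x z) * lsum q \<nu> (\<lambda>\<eta>. (if \<eta> \<in> TA then 1 else 0) * Kg W z \<eta>) N)"
  proof (intro sum.cong refl)
    fix z assume z: "z \<in> nbrs q x"
    have "length z \<le> N" using nbrs_len[OF z] by (simp add: N_def)
    then show "of_real (trans_prob q \<alpha> \<omega> x z) * GA z = of_real (trans_prob q \<alpha> \<omega> x z) * lsum q \<nu> (\<lambda>\<eta>. (if \<eta> \<in> TA then 1 else 0) * Kg W z \<eta>) N"
      using GA_N[of z N] unfolding FA_def N_def by simp
  qed
  also have "\<dots> = lam * lsum q \<nu> (\<lambda>\<eta>. (if \<eta> \<in> TA then 1 else 0) * Kg W x \<eta>) N"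
    by (rule harm_gen[OF x]) auto
  also have "\<dots> = lam * GA x" using GA_N[of x N] unfolding N_def FA_def by simp
  finally show ?thesis .
qed

lemma harmB: assumes x: "x \<in> verts q"
  shows "(\<Sum>z\<in>nbrs q x. of_real (trans_prob q \<alpha> \<omega> x z) * GB z) = lam * GB x"
proof -
  define N where "N = Suc (Suc (length x))"
  have "(\<Sum>z\<in>nbrs q x. of_real (trans_prob q \<alpha> \<omega> x z) * GB z) =
     (\<Sum>z\<in>nbrs q x. of_real (trans_prob q \<alpha> \<omega> x z) * lsum q \<nu> (\<lambda>\<eta>. (if \<eta> \<in> TA then 0 else 1) * Kg W z \<eta>) N)"
  proof (intro sum.cong refl)
    fix z assume z: "z \<in> nbrs q x"
    have "length z \<le> N" using nbrs_len[OF z] by (simp add: N_def)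
    then show "of_real (trans_prob q \<alpha> \<omega> x z) * GB z = of_real (trans_prob q \<alpha> \<omega> x z) * lsum q \<nu> (\<lambda>\<eta>. (if \<eta> \<in> TA then 0 else 1) * Kg W z \<eta>) N"
      using GB_N[of z N] unfolding FB_def N_def by simp
  qed
  also have "\<dots> = lam * lsum q \<nu> (\<lambda>\<eta>. (if \<eta> \<in> TA then 0 else 1) * Kg W x \<eta>) N"
    by (rule harm_gen[OF x]) auto
  also have "\<dots> = lam * GB x" using GB_N[of x N] unfolding N_def FB_def by simp
  finally show ?thesis .
qed

end


context realctx
begin

lemma lsum_pos:
  assumes N: "length x < N" and I: "\<And>\<eta>. I \<eta> = 0 \<or> I \<eta> = 1"
    and y0: "y0 \<in> tlevel q N" "I (rep q y0) = 1"
  shows "posr (lsum q \<nu> (\<lambda>\<eta>. I \<eta> * Kg W x \<eta>) N)"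
proof -
  define tt where "tt y = (if I (rep q y) = 1 then Re (Kg W x (rep q y)) * Re (\<nu> (tarc q y)) else 0)" for y
  have trm: "I (rep q y) * Kg W x (rep q y) * \<nu> (tarc q y) = of_real (tt y)" if y: "y \<in> tlevel q N" for y
  proof -
    have yv: "y \<in> verts q" using y by (simp add: tlevel_def)
    have k: "Kg W x (rep q y) = of_real (Re (Kg W x (rep q y)))" using posr_Re[OF posr_Kg[OF posW]] by blast
    have n: "\<nu> (tarc q y) = of_real (Re (\<nu> (tarc q y)))" using posr_Re[OF nu_posr[OF yv]] by blast
    show ?thesis
    proof (cases "I (rep q y) = 1")
      case True
      have "I (rep q y) * Kg W x (rep q y) * \<nu> (tarc q y) = of_real (Re (Kg W x (rep q y))) * of_real (Re (\<nu> (tarc q y)))"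
        using True k n by simp
      then show ?thesis using True unfolding tt_def by simp
    next
      case False
      then have "I (rep q y) = 0" using I[of "rep q y"] by blast
      then show ?thesis using False unfolding tt_def by simp
    qed
  qed
  have tt0: "tt y \<ge> 0" if "y \<in> tlevel q N" for y
  proof -
    have "Re (Kg W x (rep q y)) > 0" using posr_Re[OF posr_Kg[OF posW]] by blast
    moreover have "Re (\<nu> (tarc q y)) > 0" using posr_Re[OF nu_posr] that by (auto simp: tlevel_def)
    ultimately show ?thesis unfolding tt_def by simp
  qed
  have tt1: "tt y0 > 0"
    using y0 posr_Re[OF posr_Kg[OF posW]] posr_Re[OF nu_posr] unfolding tt_def by (auto simp: tlevel_def)
  have "lsum q \<nu> (\<lambda>\<eta>. I \<eta> * Kg W x \<eta>) N = of_real (\<Sum>y\<in>tlevel q N. tt y)"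
    unfolding lsum_def of_real_sum using trm by (intro sum.cong) auto
  moreover have "(\<Sum>y\<in>tlevel q N. tt y) > 0"
    using sum_pos2[of "tlevel q N" y0 tt] finite_tlevel y0(1) tt1 tt0 by blast
  ultimately show ?thesis unfolding posr_def by blast
qed

lemma GA_pos: assumes x: "x \<in> verts q" shows "posr (GA x)"
proof -
  define N where "N = Suc (length x)"
  have y0: "pref \<xi> N \<in> tlevel q N" using pref_verts[OF \<xi>] by (simp add: tlevel_def)
  have "rep q (pref \<xi> N) \<in> TA"
    using TA_iff[OF rep_in[OF q1 pref_verts[OF \<xi>]], of N] by (simp add: N_def take_pref a0_def)
  then show ?thesis unfolding GA_def FA_def N_def[symmetric]
    by (intro lsum_pos[OF _ _ y0]) (auto simp: N_def)
qed

definition b1 where "b1 = (if \<xi> 0 = 0 then 1 else (0::nat))"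

lemma b1v: "[b1] \<in> verts q" using verts_snoc[of "[]" b1 q] q1 by (simp add: b1_def)

lemma GB_pos: assumes x: "x \<in> verts q" shows "posr (GB x)"
proof -
  define N where "N = Suc (length x)"
  define \<eta>1 where "\<eta>1 = rep q [b1]"
  have e1: "\<eta>1 \<in> tarc q [b1]" unfolding \<eta>1_def by (rule rep_in[OF q1 b1v])
  then have e1e: "\<eta>1 \<in> ends q" by (simp add: tarc_iff)
  have y1: "pref \<eta>1 N \<in> tlevel q N" using pref_verts[OF e1e] by (simp add: tlevel_def)
  have t1: "take 1 (pref \<eta>1 N) = [b1]" using e1 by (simp add: N_def take_pref tarc_iff)
  have "a0 = [\<xi> 0]" by (simp add: a0_def pref_def)
  then have "take 1 (pref \<eta>1 N) \<noteq> a0" using t1 by (simp add: b1_def)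
  then have "rep q (pref \<eta>1 N) \<notin> TA"
    using TA_iff[OF rep_in[OF q1 pref_verts[OF e1e]], of N] by (simp add: N_def)
  then show ?thesis unfolding GB_def FB_def N_def[symmetric]
    by (intro lsum_pos[OF _ _ y1]) (auto simp: N_def)
qed

lemma root_sum: "GA [] + GB [] = 1" using GA_GB[of "[]"] by simp

lemma at_a0: "GA a0 = GA [] / W [] a0" "GB a0 = W a0 [] * GB []"
proof -
  have a0e: "a0 = [] @ [\<xi> 0]" by (simp add: a0_def pref_def)
  have K0: "Kg W [] (rep q y) = 1" for y by simp
  have Ka: "Kg W a0 (rep q y) = (if y = a0 then 1 / W [] a0 else W a0 [])" if y: "y \<in> tlevel q 1" for y
  proof -
    have yv: "y \<in> verts q" and yl: "length y = 1" using y by (auto simp: tlevel_def)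
    have c: "confE a0 (rep q y) = lcp a0 y" using confE_rep[OF q1 yv, of a0] a0l yl by simp
    show ?thesis
    proof (cases "y = a0")
      case True
      then show ?thesis using c geo_root_snoc[of W "[]" "\<xi> 0"] a0e by (simp add: Kg_def)
    next
      case False
      then have "length (lcp a0 y) < 1" using lcp_same_len_neq[of a0 y] a0l yl by simp
      then have "lcp a0 y = []" by simp
      then show ?thesis using c False geo_edge_up[of W "[]" "\<xi> 0"] a0e by (simp add: Kg_def)
    qed
  qed
  have TAy: "rep q y \<in> TA \<longleftrightarrow> y = a0" if y: "y \<in> tlevel q 1" for y
    using TA_iff[OF rep_in[OF q1, of y]] y by (auto simp: tlevel_def)
  have ga0: "GA a0 = lsum q \<nu> (FA a0) 1" using GA_N[of a0 1] a0l by simp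
  have ga1: "GA [] = lsum q \<nu> (FA []) 1" using GA_N[of "[]" 1] by simp
  have gb0: "GB a0 = lsum q \<nu> (FB a0) 1" using GB_N[of a0 1] a0l by simp
  have gb1: "GB [] = lsum q \<nu> (FB []) 1" using GB_N[of "[]" 1] by simp
  have "GA a0 = (\<Sum>y\<in>tlevel q 1. (if y = a0 then 1 else 0) * \<nu> (tarc q y) / W [] a0)"
    unfolding ga0 FA_def lsum_def using a0l Ka TAy by (intro sum.cong) auto
  also have "\<dots> = GA [] / W [] a0"
    unfolding ga1 FA_def lsum_def using TAy by (simp add: sum_divide_distrib[symmetric])
  finally show "GA a0 = GA [] / W [] a0" .
  have "GB a0 = (\<Sum>y\<in>tlevel q 1. W a0 [] * ((if y = a0 then 0 else 1) * \<nu> (tarc q y)))"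
    unfolding gb0 FB_def lsum_def using a0l Ka TAy by (intro sum.cong) auto
  also have "\<dots> = W a0 [] * GB []"
    unfolding gb1 FB_def lsum_def using TAy by (simp add: sum_distrib_left[symmetric])
  finally show "GB a0 = W a0 [] * GB []" .
qed

end


context realctx
begin

lemma HsetI:
  assumes pos: "\<And>x. x \<in> verts q \<Longrightarrow> posr (G x)" and g0: "G [] = 1"
    and harm: "\<And>x. x \<in> verts q \<Longrightarrow> (\<Sum>z\<in>nbrs q x. of_real (trans_prob q \<alpha> \<omega> x z) * G z) = lam * G x"
  shows "(\<lambda>x. if x \<in> verts q then Re (G x) else 0) \<in> Hset q \<alpha> \<omega> l"
  unfolding Hset_def
proof (intro CollectI conjI ballI allI impI)
  fix x assume x: "x \<in> verts q"
  show "0 < (if x \<in> verts q then Re (G x) else 0)" using posr_Re[OF pos[OF x]] x by simp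
  have "Re (\<Sum>z\<in>nbrs q x. of_real (trans_prob q \<alpha> \<omega> x z) * G z) = Re (lam * G x)" using harm[OF x] by simp
  then have "(\<Sum>z\<in>nbrs q x. trans_prob q \<alpha> \<omega> x z * Re (G z)) = l * Re (G x)"
    by (simp add: Re_sum lam_l)
  moreover have "(\<Sum>z\<in>nbrs q x. trans_prob q \<alpha> \<omega> x z * (if z \<in> verts q then Re (G z) else 0)) =
      (\<Sum>z\<in>nbrs q x. trans_prob q \<alpha> \<omega> x z * Re (G z))"
    by (intro sum.cong) (auto simp: nbrs_verts)
  ultimately show "(\<Sum>y\<in>nbrs q x. trans_prob q \<alpha> \<omega> x y * (if y \<in> verts q then Re (G y) else 0)) =
      l * (if x \<in> verts q then Re (G x) else 0)" using x by simp
qed (use g0 in auto)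

lemma harmK: "x \<in> verts q \<Longrightarrow> (\<Sum>z\<in>nbrs q x. of_real (trans_prob q \<alpha> \<omega> x z) * Kg W' z \<xi>) = lam * Kg W' x \<xi>"
proof -
  assume x: "x \<in> verts q"
  have Weq: "W' = edge_w (cc q \<alpha> * a') a' \<omega>" using W'_def cdef by simp
  show ?thesis using harmonic[OF q1 x \<omega> \<xi> a'0 \<alpha>0 \<alpha>1 quad'] unfolding Weq[symmetric] .
qed

lemma hset_part:
  "\<exists>h\<in>Hset q \<alpha> \<omega> l. (\<forall>x\<in>verts q. Kg W' x \<xi> = complex_of_real (h x)) \<and> \<not> minimal_in (Hset q \<alpha> \<omega> l) h"
proof -
  define h where "h x = (if x \<in> verts q then Re (Kg W' x \<xi>) else 0)" for x
  have hH: "h \<in> Hset q \<alpha> \<omega> l" unfolding h_def[abs_def]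
    by (rule HsetI) (use posr_Kg[OF posW'] harmK in auto)
  have hK: "\<forall>x\<in>verts q. Kg W' x \<xi> = complex_of_real (h x)"
    using posr_Re[OF posr_Kg[OF posW']] by (simp add: h_def)
  obtain tA where tA: "GA [] = of_real tA" "tA > 0" using GA_pos[OF verts_Nil] unfolding posr_def by blast
  obtain tB where tB: "GB [] = of_real tB" "tB > 0" using GB_pos[OF verts_Nil] unfolding posr_def by blast
  have tAB: "tA + tB = 1" using root_sum tA tB by (metis of_real_add of_real_eq_1_iff)
  define h1 where "h1 x = (if x \<in> verts q then Re (GA x / GA []) else 0)" for x
  define h2 where "h2 x = (if x \<in> verts q then Re (GB x / GB []) else 0)" for x
  have h1H: "h1 \<in> Hset q \<alpha> \<omega> l" unfolding h1_def[abs_def]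
  proof (rule HsetI)
    show "posr (GA x / GA [])" if "x \<in> verts q" for x using GA_pos[OF that] GA_pos[OF verts_Nil] by (rule posr_div)
    show "GA [] / GA [] = 1" using tA by simp
    show "(\<Sum>z\<in>nbrs q x. of_real (trans_prob q \<alpha> \<omega> x z) * (GA z / GA [])) = lam * (GA x / GA [])"
      if "x \<in> verts q" for x
      using harmA[OF that] by (simp add: sum_divide_distrib[symmetric] times_divide_eq_right)
  qed
  have h2H: "h2 \<in> Hset q \<alpha> \<omega> l" unfolding h2_def[abs_def]
  proof (rule HsetI)
    show "posr (GB x / GB [])" if "x \<in> verts q" for x using GB_pos[OF that] GB_pos[OF verts_Nil] by (rule posr_div)
    show "GB [] / GB [] = 1" using tB by simp
    show "(\<Sum>z\<in>nbrs q x. of_real (trans_prob q \<alpha> \<omega> x z) * (GB z / GB [])) = lam * (GB x / GB [])"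
      if "x \<in> verts q" for x
      using harmB[OF that] by (simp add: sum_divide_distrib[symmetric] times_divide_eq_right)
  qed
  have decomp: "h = (\<lambda>x. tA * h1 x + (1 - tA) * h2 x)"
  proof
    fix x
    show "h x = tA * h1 x + (1 - tA) * h2 x"
    proof (cases "x \<in> verts q")
      case True
      have "Kg W' x \<xi> = GA x + GB x" using GA_GB[OF True] by simp
      then have "Re (Kg W' x \<xi>) = Re (GA x) + Re (GB x)" by simp
      moreover have "Re (GA x / GA []) = Re (GA x) / tA" using tA by (simp add: Re_divide_of_real)
      moreover have "Re (GB x / GB []) = Re (GB x) / tB" using tB by (simp add: Re_divide_of_real)
      moreover have "1 - tA = tB" using tAB by simp
      ultimately show ?thesis using True tA tB by (simp add: h_def h1_def h2_def)
    qed (simp add: h_def h1_def h2_def)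
  qed
  have neq: "h1 \<noteq> h2"
  proof
    assume e: "h1 = h2"
    obtain wA where wA: "W [] a0 = of_real wA" "wA > 0" using posW unfolding posr_def by blast
    obtain wB where wB: "W a0 [] = of_real wB" "wB > 0" using posW unfolding posr_def by blast
    have "h1 a0 = 1 / wA" using at_a0(1) tA wA a0v by (simp add: h1_def)
    moreover have "h2 a0 = wB" using at_a0(2) tB wB a0v by (simp add: h2_def)
    ultimately have "1 / wA = wB" using e by simp
    then have "wA * wB = 1" using wA by (simp add: field_simps)
    moreover have "W a0 [] * W [] a0 = c * a * a"
      using prod_WW[of "[]" "\<xi> 0"] by (simp add: a0_def pref_def)
    then have "of_real (wA * wB) = (of_real (rr / real q) :: complex)" using wA wB pi_eq rr by (simp add: mult.commute)
    then have "wA * wB = rr / real q" by (simp only: of_real_eq_iff)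
    moreover have "rr / real q < 1" using rr1 q1 rr by (simp add: divide_less_eq) 
    ultimately show False by simp
  qed
  have t1: "tA < 1" using tAB tB by simp
  have "\<not> minimal_in (Hset q \<alpha> \<omega> l) h"
    unfolding minimal_in_def using h1H h2H decomp neq tA(2) t1 by blast
  then show ?thesis using hH hK by blast
qed

end


theorem theorem4p5:
  fixes q :: nat and \<alpha> :: real and \<omega> \<xi> :: "nat \<Rightarrow> nat" and lam :: complex
    and \<nu> \<nu>t :: "(nat \<Rightarrow> nat) set \<Rightarrow> complex"
  defines "\<rho> \<equiv> 2 * sqrt (\<alpha> * (1 - \<alpha>))"
  defines "lam0 \<equiv> (real q + 1) / (2 * sqrt (real q)) * \<rho>"
  assumes q: "q \<ge> 2"
    and \<alpha>: "0 < \<alpha>" "\<alpha> < 1"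
    and \<omega>: "\<omega> \<in> ends q"
    and \<xi>: "\<xi> \<in> ends q"
    and lam: "lam \<notin> complex_of_real ` {-\<rho>..\<rho>}" "lam \<noteq> complex_of_real lam0"
    and \<nu>: "strong_distribution q \<nu>"
      "\<forall>x\<in>verts q. Kkert q \<alpha> \<omega> lam x \<xi> = dist_integral q \<nu> (Kker q \<alpha> \<omega> lam x)"
    and \<nu>t: "strong_distribution q \<nu>t"
      "\<forall>x\<in>verts q. Kker q \<alpha> \<omega> lam x \<xi> = dist_integral q \<nu>t (Kkert q \<alpha> \<omega> lam x)"
  shows "extends_to_borel q \<nu> \<and> \<not> extends_to_borel q \<nu>t \<and>
    (lam \<in> \<real> \<and> Re lam > \<rho> \<longrightarrow>
      (\<exists>M. prob_space M \<and> space M = ends q \<and> sets M = sets (bdry_borel q) \<and>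
           (\<forall>A\<in>bdry_alg q. \<nu> A = complex_of_real (measure M A)) \<and>
           (\<forall>U. openin (bdry_top q) U \<and> U \<noteq> {} \<longrightarrow> measure M U > 0)) \<and>
      (\<exists>h\<in>Hset q \<alpha> \<omega> (Re lam). (\<forall>x\<in>verts q. Kkert q \<alpha> \<omega> lam x \<xi> = complex_of_real (h x)) \<and>
           \<not> minimal_in (Hset q \<alpha> \<omega> (Re lam)) h))"
proof -
  have q1: "q \<ge> 1" using q by simp
  have \<rho>e: "\<rho> = 2 * sqrt (\<alpha> * (1 - \<alpha>))" by (simp add: \<rho>_def)
  note facts = \<alpha>(1) \<alpha>(2) lam(1) \<rho>e
  have d: "distribution q \<nu>" using \<nu>(1) by (simp add: strong_distribution_def)
  have dt: "distribution q \<nu>t" using \<nu>t(1) by (simp add: strong_distribution_def)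
  have hypN: "\<forall>z\<in>verts q. Kg (edge_w (cc q \<alpha> * Fmt \<alpha> lam) (Fmt \<alpha> lam) \<omega>) z \<xi> =
      dist_integral q \<nu> (Kg (edge_w (cc q \<alpha> * Fm \<alpha> lam) (Fm \<alpha> lam) \<omega>) z)"
    using \<nu>(2) unfolding Kker_Kg Kkert_Kg Fp_cc Fpt_cc .
  have wp: "wpair q (cc q \<alpha>) (Fm \<alpha> lam) (Fmt \<alpha> lam)"
  proof
    show "1 \<le> q" by (rule q1)
    show "Fm \<alpha> lam \<noteq> 0" by (rule Fm_nz[OF facts])
    show "Fmt \<alpha> lam \<noteq> 0" by (rule Fmt_nz[OF facts])
    show "cc q \<alpha> * Fm \<alpha> lam * Fmt \<alpha> lam = 1 / of_nat q"
      using F_prod[OF facts] cc_prod[OF \<alpha> q1] by (simp add: mult.assoc)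
  qed
  have rlt: "norm (Fm \<alpha> lam / Fmt \<alpha> lam) < 1"
    using norm_F_less[OF facts] Fmt_nz[OF facts] by (simp add: norm_divide)
  have nc: "nuctx q \<omega> (cc q \<alpha>) (Fm \<alpha> lam) (Fmt \<alpha> lam) \<nu> \<xi>"
  proof (rule nuctx.intro[OF wp])
    show "nuctx_axioms q \<omega> (cc q \<alpha>) (Fm \<alpha> lam) (Fmt \<alpha> lam) \<nu> \<xi>"
      unfolding nuctx_axioms_def wpair.W_def[OF wp] wpair.W'_def[OF wp] wpair.r_def[OF wp]
      using \<xi> d hypN rlt by blast
  qed
  interpret N: nuctx q \<omega> "cc q \<alpha>" "Fm \<alpha> lam" "Fmt \<alpha> lam" \<nu> \<xi> by (rule nc)
  have ext: "extends_to_borel q \<nu>" by (rule N.extends)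
  have nxt: "\<not> extends_to_borel q \<nu>t" by (rule not_extends_t[OF q \<alpha> lam(1) \<rho>e \<xi> dt \<nu>t(2)])
  have real: "(\<exists>M. prob_space M \<and> space M = ends q \<and> sets M = sets (bdry_borel q) \<and>
           (\<forall>A\<in>bdry_alg q. \<nu> A = complex_of_real (measure M A)) \<and>
           (\<forall>U. openin (bdry_top q) U \<and> U \<noteq> {} \<longrightarrow> measure M U > 0)) \<and>
      (\<exists>h\<in>Hset q \<alpha> \<omega> (Re lam). (\<forall>x\<in>verts q. Kkert q \<alpha> \<omega> lam x \<xi> = complex_of_real (h x)) \<and>
           \<not> minimal_in (Hset q \<alpha> \<omega> (Re lam)) h)"
    if re: "lam \<in> \<real>" "Re lam > \<rho>"
  proof -
    obtain fm fmt where F: "Fm \<alpha> lam = of_real fm" "Fmt \<alpha> lam = of_real fmt" "0 < fm" "fm < fmt"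
      using real_F[OF facts re] by blast
    have lamRe: "lam = of_real (Re lam)" using re(1) by (simp add: complex_is_Real_iff complex_eq_iff)
    have rc: "realctx q \<omega> (cc q \<alpha>) (Fm \<alpha> lam) (Fmt \<alpha> lam) \<nu> \<xi> \<alpha> lam (fm / fmt) (Re lam)"
    proof (rule realctx.intro[OF nc])
      show "realctx_axioms q \<omega> (cc q \<alpha>) (Fm \<alpha> lam) (Fmt \<alpha> lam) \<alpha> lam (fm / fmt) (Re lam)"
      proof
        show "2 \<le> q" by (rule q)
        show "\<omega> \<in> ends q" by (rule \<omega>)
        show "0 < \<alpha>" "\<alpha> < 1" by (rule \<alpha>(1), rule \<alpha>(2))
        show "cc q \<alpha> = cc q \<alpha>" ..
        show "of_real \<alpha> * Fm \<alpha> lam + of_real (1 - \<alpha>) / Fm \<alpha> lam = lam" by (rule quad_m[OF facts])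
        show "of_real \<alpha> * Fmt \<alpha> lam + of_real (1 - \<alpha>) / Fmt \<alpha> lam = lam" by (rule quad_t[OF facts])
        show "lam = of_real (Re lam)" by (rule lamRe)
        show "posr (Fm \<alpha> lam)" using F unfolding posr_def by blast
        show "posr (Fmt \<alpha> lam)" using F unfolding posr_def by auto
        show "wpair.r (Fm \<alpha> lam) (Fmt \<alpha> lam) = of_real (fm / fmt)"
        proof -
          have "wpair.r (Fm \<alpha> lam) (Fmt \<alpha> lam) = Fm \<alpha> lam / Fmt \<alpha> lam" by (rule wpair.r_def[OF wp])
          then show ?thesis using F by simp
        qed
        show "0 < fm / fmt" using F by simp
      qed
    qed
    interpret R: realctx q \<omega> "cc q \<alpha>" "Fm \<alpha> lam" "Fmt \<alpha> lam" \<nu> \<xi> \<alpha> lam "fm / fmt" "Re lam" by (rule rc)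
    have W'e: "N.W' = edge_w (Fpt q \<alpha> lam) (Fmt \<alpha> lam) \<omega>" unfolding N.W'_def Fpt_cc ..
    show ?thesis using R.measure_part R.hset_part unfolding Kkert_Kg W'e[symmetric] by blast
  qed
  show ?thesis using ext nxt real by blast
qed


end
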